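(* Let $G$ be a $(k+1)$-critical hypergraph for some integer $k\ge2$. If $G$ has exactly one high vertex, then either $G$ has a separating vertex set of size $2$, or $k=2$ and $G$ is a hyperwheel, or $k=3$ and $G$ is an odd wheel.
   Context: A hypergraph is a pair $G=(V,E)$ of finite sets with $E\subseteq 2^V$ and $|e|\ge2$ for all $e\in E$; edges of size 2 are ordinary. A coloring requires every edge to contain two vertices of different colors; $\chi$ is the chromatic number. $G$ is $(k+1)$-critical if $\chi(G)=k+1$ but $\chi(H)\le k$ for every proper subhypergraph $H$. The degree $d_G(v)$ is the number of edges containing $v$ (every $(k+1)$-critical hypergraph has minimum degree at least $k$). In a $(k+1)$-critical hypergraph, a vertex of degree $k$ is low and a vertex of degree at least $k+1$ is high. A set $S\subseteq V(G)$ is a separating vertex set if $G$ is the union of two induced subhypergraphs $G_1,G_2$ with $V(G_1)\cap V(G_2)=S$ and $|V(G_i)|>|S|$. A hyperwheel is obtained from a single edge (of any size $\ge 2$) by adding one new vertex joined by ordinary edges to every vertex of that edge. An odd wheel is an odd cycle of ordinary edges plus a new vertex joined by ordinary edges to all cycle vertices. *)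

theory Defs
  imports Main
begin

definition hypergraph :: "'a set \<Rightarrow> 'a set set \<Rightarrow> bool" where
  "hypergraph V E \<longleftrightarrow> finite V \<and> E \<subseteq> Pow V \<and> (\<forall>e\<in>E. card e \<ge> 2)"

definition is_coloring :: "'a set \<Rightarrow> 'a set set \<Rightarrow> nat \<Rightarrow> ('a \<Rightarrow> nat) \<Rightarrow> bool" where
  "is_coloring V E k f \<longleftrightarrow> f ` V \<subseteq> {..<k} \<and> (\<forall>e\<in>E. \<exists>u\<in>e. \<exists>v\<in>e. f u \<noteq> f v)"

definition colorable :: "'a set \<Rightarrow> 'a set set \<Rightarrow> nat \<Rightarrow> bool" where
  "colorable V E k \<longleftrightarrow> (\<exists>f. is_coloring V E k f)"

definition chromatic_number :: "'a set \<Rightarrow> 'a set set \<Rightarrow> nat" where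
  "chromatic_number V E = (LEAST k. colorable V E k)"

definition subhypergraph :: "'a set \<Rightarrow> 'a set set \<Rightarrow> 'a set \<Rightarrow> 'a set set \<Rightarrow> bool" where
  "subhypergraph V' E' V E \<longleftrightarrow> hypergraph V' E' \<and> V' \<subseteq> V \<and> E' \<subseteq> E"

definition critical :: "nat \<Rightarrow> 'a set \<Rightarrow> 'a set set \<Rightarrow> bool" where
  "critical m V E \<longleftrightarrow> hypergraph V E \<and> chromatic_number V E = m \<and>
     (\<forall>V' E'. subhypergraph V' E' V E \<and> (V', E') \<noteq> (V, E) \<longrightarrow> chromatic_number V' E' < m)"

definition degree :: "'a set set \<Rightarrow> 'a \<Rightarrow> nat" where
  "degree E v = card {e\<in>E. v \<in> e}"

definition high_vertices :: "nat \<Rightarrow> 'a set \<Rightarrow> 'a set set \<Rightarrow> 'a set" where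
  "high_vertices k V E = {v\<in>V. degree E v \<ge> k + 1}"

definition separating_set :: "'a set \<Rightarrow> 'a set set \<Rightarrow> 'a set \<Rightarrow> bool" where
  "separating_set V E S \<longleftrightarrow> (\<exists>V1 V2. V1 \<subseteq> V \<and> V2 \<subseteq> V \<and> V1 \<union> V2 = V \<and> V1 \<inter> V2 = S \<and>
      card V1 > card S \<and> card V2 > card S \<and>
      E = {e\<in>E. e \<subseteq> V1} \<union> {e\<in>E. e \<subseteq> V2})"

definition hyperwheel :: "'a set \<Rightarrow> 'a set set \<Rightarrow> bool" where
  "hyperwheel V E \<longleftrightarrow> (\<exists>e w. card e \<ge> 2 \<and> finite e \<and> w \<notin> e \<and> V = insert w e \<and>
      E = insert e {{w, u} | u. u \<in> e})"

definition odd_wheel :: "'a set \<Rightarrow> 'a set set \<Rightarrow> bool" where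
  "odd_wheel V E \<longleftrightarrow> (\<exists>c w. distinct c \<and> length c \<ge> 3 \<and> odd (length c) \<and> w \<notin> set c \<and>
      V = insert w (set c) \<and>
      E = {{c ! i, c ! ((i + 1) mod length c)} | i. i < length c} \<union> {{w, c ! i} | i. i < length c})"

end

theory Submission
  imports Defs
begin


definition nonmono :: "('a \<Rightarrow> nat) \<Rightarrow> 'a set \<Rightarrow> bool" where
  "nonmono f e \<longleftrightarrow> (\<exists>u\<in>e. \<exists>v\<in>e. f u \<noteq> f v)"

definition forb :: "'a set set \<Rightarrow> ('a \<Rightarrow> nat) \<Rightarrow> 'a \<Rightarrow> 'a set \<Rightarrow> nat set" where
  "forb E f w U = {c. \<exists>e\<in>E. w \<in> e \<and> e \<inter> U = {} \<and> (\<forall>u\<in>e-{w}. f u = c)}"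

lemma hg_finite_E: "hypergraph V E \<Longrightarrow> finite E"
  unfolding hypergraph_def by (meson finite_Pow_iff finite_subset)

lemma hg_edge_sub: "hypergraph V E \<Longrightarrow> e \<in> E \<Longrightarrow> e \<subseteq> V"
  unfolding hypergraph_def by blast

lemma hg_edge_fin: "hypergraph V E \<Longrightarrow> e \<in> E \<Longrightarrow> finite e"
  unfolding hypergraph_def by (meson PowD finite_subset subsetD)

lemma hg_edge_card: "hypergraph V E \<Longrightarrow> e \<in> E \<Longrightarrow> card e \<ge> 2"
  unfolding hypergraph_def by blast

lemma card2_other: assumes "finite e" "card e \<ge> 2" shows "\<exists>u\<in>e. u \<noteq> w"
proof (rule ccontr)
  assume "\<not> ?thesis" then have "e \<subseteq> {w}" by blast
  then have "card e \<le> 1" using card_mono[of "{w}" e] by simp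
  then show False using assms by simp
qed

lemma hg_other: "hypergraph V E \<Longrightarrow> e \<in> E \<Longrightarrow> \<exists>u\<in>e. u \<noteq> w"
  using card2_other hg_edge_fin hg_edge_card by metis

lemma card_sub_image: "finite S \<Longrightarrow> A \<subseteq> g ` S \<Longrightarrow> card A \<le> card S"
  using card_image_le card_mono finite_imageI le_trans by metis

lemma forb_sub_image:
  assumes hg: "hypergraph V E"
  shows "forb E f w U \<subseteq> (\<lambda>e. f (SOME u. u \<in> e - {w})) ` {e\<in>E. w \<in> e \<and> e \<inter> U = {}}"
proof
  fix c assume "c \<in> forb E f w U"
  then obtain e where e: "e \<in> E" "w \<in> e" "e \<inter> U = {}" "\<forall>u\<in>e-{w}. f u = c"
    unfolding forb_def by blast
  obtain u where "u \<in> e" "u \<noteq> w" using hg_other[OF hg e(1)] by blast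
  then have "(SOME u. u \<in> e - {w}) \<in> e - {w}" by (metis DiffI singletonD someI)
  then have "f (SOME u. u \<in> e - {w}) = c" using e(4) by blast
  then show "c \<in> (\<lambda>e. f (SOME u. u \<in> e - {w})) ` {e\<in>E. w \<in> e \<and> e \<inter> U = {}}"
    using e by blast
qed

lemma forb_card:
  assumes hg: "hypergraph V E"
  shows "card (forb E f w U) \<le> card {e\<in>E. w \<in> e \<and> e \<inter> U = {}}"
proof -
  have fin: "finite {e\<in>E. w \<in> e \<and> e \<inter> U = {}}" using hg_finite_E[OF hg] by simp
  show ?thesis using le_trans[OF card_mono[OF finite_imageI[OF fin] forb_sub_image[OF hg, of f w U]] card_image_le[OF fin]] .
qed

lemma forb_finite: "hypergraph V E \<Longrightarrow> finite (forb E f w U)"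
  using forb_sub_image hg_finite_E by (metis (no_types, lifting) finite_imageI finite_subset mem_Collect_eq subsetI)

lemma degree_fin: "hypergraph V E \<Longrightarrow> finite {e\<in>E. P e}"
proof -
  assume "hypergraph V E"
  then have "finite E" by (rule hg_finite_E)
  then show ?thesis by (rule finite_subset[rotated]) blast
qed

lemma forb_card_deg:
  assumes hg: "hypergraph V E"
  shows "card (forb E f w {}) \<le> degree E w"
  using forb_card[OF hg, of f w "{}"] unfolding degree_def by simp

lemma forb_lt_nonmono:
  assumes hg: "hypergraph V E" and e0: "e0 \<in> E" "w \<in> e0" and xy: "x \<in> e0" "y \<in> e0" "x \<noteq> w" "y \<noteq> w" "f x \<noteq> f y"
  shows "card (forb E f w {}) < degree E w"
proof -
  let ?S = "{e\<in>E. w \<in> e}"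
  let ?phi = "\<lambda>e. f (SOME u. u \<in> e - {w})"
  have fin: "finite ?S" using hg_finite_E[OF hg] by simp
  have "forb E f w {} \<subseteq> ?phi ` (?S - {e0})"
  proof
    fix c assume "c \<in> forb E f w {}"
    then obtain e where e: "e \<in> E" "w \<in> e" "\<forall>u\<in>e-{w}. f u = c"
      unfolding forb_def by blast
    have "e \<noteq> e0" using e(3) xy by auto
    obtain u where "u \<in> e" "u \<noteq> w" using hg_other[OF hg e(1)] by blast
    then have "(SOME u. u \<in> e - {w}) \<in> e - {w}" by (metis DiffI singletonD someI)
    then have "?phi e = c" using e(3) by blast
    then show "c \<in> ?phi ` (?S - {e0})" using e \<open>e \<noteq> e0\<close> by blast
  qed
  then have "card (forb E f w {}) \<le> card (?S - {e0})"
    using card_sub_image[OF finite_Diff[OF fin]] by blast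
  also have "\<dots> < card ?S" by (rule card_Diff1_less[OF fin]) (use e0 in blast)
  finally show ?thesis unfolding degree_def .
qed

lemma forb_lt_two:
  assumes hg: "hypergraph V E" and e1: "e1 \<in> E" "w \<in> e1" and e2: "e2 \<in> E" "w \<in> e2" "e1 \<noteq> e2"
    and xy: "x \<in> e1" "y \<in> e2" "x \<noteq> w" "y \<noteq> w" "f x = f y"
  shows "card (forb E f w {}) < degree E w"
proof -
  let ?S = "{e\<in>E. w \<in> e}"
  let ?phi = "\<lambda>e. f (SOME u. u \<in> e - {w})"
  have fin: "finite ?S" using hg_finite_E[OF hg] by simp
  have phi: "?phi e \<in> f ` (e - {w})" if eE: "e \<in> E" for e
  proof -
    obtain u where "u \<in> e" "u \<noteq> w" using hg_other[OF hg eE] by blast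
    then have "(SOME u. u \<in> e - {w}) \<in> e - {w}" by (metis DiffI singletonD someI)
    then show ?thesis by blast
  qed
  have "\<exists>e0\<in>?S. forb E f w {} \<subseteq> ?phi ` (?S - {e0})"
  proof (cases "\<forall>u\<in>e1-{w}. f u = f x")
    case True
    have "forb E f w {} \<subseteq> ?phi ` (?S - {e2})"
    proof
      fix c assume "c \<in> forb E f w {}"
      then obtain e where e: "e \<in> E" "w \<in> e" "\<forall>u\<in>e-{w}. f u = c"
        unfolding forb_def by blast
      have "?phi e = c" using phi[OF e(1)] e(3) by auto
      show "c \<in> ?phi ` (?S - {e2})"
      proof (cases "e = e2")
        case True
        then have "c = f x" using e(3) xy by auto
        moreover have "?phi e1 = f x" using phi[OF e1(1)] \<open>\<forall>u\<in>e1-{w}. f u = f x\<close> by auto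
        ultimately show ?thesis using e1 e2 by (intro image_eqI[of _ _ e1]) auto
      next
        case False then show ?thesis using e \<open>?phi e = c\<close> by blast
      qed
    qed
    then show ?thesis using e2 by blast
  next
    case False
    have "forb E f w {} \<subseteq> ?phi ` (?S - {e1})"
    proof
      fix c assume "c \<in> forb E f w {}"
      then obtain e where e: "e \<in> E" "w \<in> e" "\<forall>u\<in>e-{w}. f u = c"
        unfolding forb_def by blast
      have "?phi e = c" using phi[OF e(1)] e(3) by auto
      have "e \<noteq> e1" using False e(3) xy by auto
      then show "c \<in> ?phi ` (?S - {e1})" using e \<open>?phi e = c\<close> by blast
    qed
    then show ?thesis using e1 by blast
  qed
  then obtain e0 where e0: "e0 \<in> ?S" "forb E f w {} \<subseteq> ?phi ` (?S - {e0})" by blast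
  then have "card (forb E f w {}) \<le> card (?S - {e0})"
    using card_sub_image[OF finite_Diff[OF fin]] by blast
  also have "\<dots> < card ?S" by (rule card_Diff1_less[OF fin e0(1)])
  finally show ?thesis unfolding degree_def .
qed

lemma free_color:
  assumes "card (F::nat set) < k" "finite F" shows "\<exists>c<k. c \<notin> F"
proof (rule ccontr)
  assume "\<not> ?thesis" then have "{..<k} \<subseteq> F" by auto
  with assms(2) have "k \<le> card F"
    by (metis card_lessThan card_mono)
  then show False using assms by simp
qed

lemma extend_vertex:
  assumes hg: "hypergraph V E" and c: "c \<notin> forb E f w U"
    and ok: "\<forall>e\<in>E. e \<inter> insert w U = {} \<longrightarrow> nonmono f e"
  shows "\<forall>e\<in>E. e \<inter> U = {} \<longrightarrow> nonmono (f(w:=c)) e"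
proof (intro ballI impI)
  fix e assume e: "e \<in> E" "e \<inter> U = {}"
  show "nonmono (f(w:=c)) e"
  proof (cases "w \<in> e")
    case False
    then have "nonmono f e" using ok e by auto
    then show ?thesis using False unfolding nonmono_def by (metis fun_upd_other)
  next
    case True
    obtain u where u: "u \<in> e" "u \<noteq> w" using hg_other[OF hg e(1)] by blast
    show ?thesis
    proof (cases "\<forall>v\<in>e-{w}. f v = f u")
      case True
      then have "f u \<in> forb E f w U" using e \<open>w \<in> e\<close> unfolding forb_def by blast
      then have "f u \<noteq> c" using c by auto
      then show ?thesis unfolding nonmono_def using u \<open>w\<in>e\<close> by (metis fun_upd_same fun_upd_other)
    next
      case False
      then obtain v where "v \<in> e" "v \<noteq> w" "f v \<noteq> f u" by blast
      then show ?thesis unfolding nonmono_def using u by (metis fun_upd_other)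
    qed
  qed
qed

lemma colorable_iff: "colorable V E k \<longleftrightarrow> (\<exists>f. f ` V \<subseteq> {..<k} \<and> (\<forall>e\<in>E. nonmono f e))"
  unfolding colorable_def is_coloring_def nonmono_def by blast

lemma extend_last:
  assumes hg: "hypergraph V E" and z: "z \<in> V" and rng: "f ` (V - {z}) \<subseteq> {..<k}"
    and ok: "\<forall>e\<in>E. z \<notin> e \<longrightarrow> nonmono f e" and lt: "card (forb E f z {}) < k"
  shows "colorable V E k"
proof -
  obtain c where c: "c < k" "c \<notin> forb E f z {}" using free_color[OF lt forb_finite[OF hg]] by blast
  have "\<forall>e\<in>E. e \<inter> {} = {} \<longrightarrow> nonmono (f(z:=c)) e"
    by (rule extend_vertex[OF hg c(2)]) (use ok in auto)
  moreover have "(f(z:=c)) ` V \<subseteq> {..<k}" using rng c(1) by auto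
  ultimately show ?thesis unfolding colorable_iff by blast
qed




lemma colorable_mono: "colorable V E a \<Longrightarrow> a \<le> b \<Longrightarrow> colorable V E b"
  unfolding colorable_iff by (meson lessThan_subset_iff order_trans)

lemma colorable_card: assumes "hypergraph V E" shows "colorable V E (card V)"
proof -
  have "finite V" using assms unfolding hypergraph_def by blast
  then obtain g where g: "bij_betw g V {0..<card V}" using ex_bij_betw_finite_nat by blast
  have "\<forall>e\<in>E. nonmono g e"
  proof
    fix e assume e: "e \<in> E"
    obtain u where u: "u \<in> e" using hg_other[OF assms e, of undefined] by blast
    obtain v where v: "v \<in> e" "v \<noteq> u" using hg_other[OF assms e, of u] by blast
    have "u \<in> V" "v \<in> V" using hg_edge_sub[OF assms e] u v by auto
    then have "g u \<noteq> g v" using g v unfolding bij_betw_def inj_on_def by metis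
    then show "nonmono g e" unfolding nonmono_def using u v by blast
  qed
  moreover have "g ` V \<subseteq> {..<card V}" using g unfolding bij_betw_def by auto
  ultimately show ?thesis unfolding colorable_iff by blast
qed

lemma chrom_col: assumes "hypergraph V E" shows "colorable V E (chromatic_number V E)"
  unfolding chromatic_number_def using colorable_card[OF assms] by (rule LeastI)

lemma crit_hg: "critical m V E \<Longrightarrow> hypergraph V E"
  unfolding critical_def by blast

lemma crit_not_col: assumes "critical (k+1) V E" shows "\<not> colorable V E k"
proof
  assume "colorable V E k"
  then have "chromatic_number V E \<le> k" unfolding chromatic_number_def by (rule Least_le)
  then show False using assms unfolding critical_def by simp
qed

lemma crit_sub_col:
  assumes "critical (k+1) V E" "subhypergraph V' E' V E" "(V',E') \<noteq> (V,E)"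
  shows "colorable V' E' k"
proof -
  have "chromatic_number V' E' < k+1" using assms unfolding critical_def by blast
  moreover have "hypergraph V' E'" using assms(2) unfolding subhypergraph_def by blast
  ultimately show ?thesis using chrom_col colorable_mono by (metis less_Suc_eq_le Suc_eq_plus1)
qed

lemma induced_hg: "hypergraph V E \<Longrightarrow> U \<subseteq> V \<Longrightarrow> hypergraph U {e\<in>E. e \<subseteq> U}"
  unfolding hypergraph_def by (auto intro: finite_subset)

lemma crit_induced_col:
  assumes "critical (k+1) V E" "U \<subseteq> V" "U \<noteq> V"
  shows "colorable U {e\<in>E. e \<subseteq> U} k"
  using assms crit_sub_col[OF assms(1)] induced_hg[OF crit_hg[OF assms(1)] assms(2)]
  unfolding subhypergraph_def by auto

lemma crit_del_edge:
  assumes "critical (k+1) V E" "e \<in> E"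
  shows "colorable V (E - {e}) k"
  using assms crit_sub_col[OF assms(1), of V "E - {e}"] crit_hg[OF assms(1)]
  unfolding subhypergraph_def hypergraph_def by auto

lemma crit_del_vertex:
  assumes "critical (k+1) V E" "v \<in> V"
  shows "colorable (V - {v}) {e\<in>E. v \<notin> e} k"
proof -
  have hg: "hypergraph V E" using crit_hg[OF assms(1)] .
  have "hypergraph (V - {v}) {e\<in>E. v \<notin> e}" using hg unfolding hypergraph_def by auto
  then show ?thesis using crit_sub_col[OF assms(1)] assms(2) unfolding subhypergraph_def by auto
qed

lemma crit_vertex_coloring:
  assumes "critical (k+1) V E" "v \<in> V"
  obtains f where "f ` (V - {v}) \<subseteq> {..<k}" "\<forall>e\<in>E. v \<notin> e \<longrightarrow> nonmono f e"
  using crit_del_vertex[OF assms] unfolding colorable_iff by blast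

lemma crit_min_degree:
  assumes "critical (k+1) V E" "v \<in> V"
  shows "degree E v \<ge> k"
proof (rule ccontr)
  assume a: "\<not> ?thesis"
  have hg: "hypergraph V E" using crit_hg[OF assms(1)] .
  obtain f where f: "f ` (V - {v}) \<subseteq> {..<k}" "\<forall>e\<in>E. v \<notin> e \<longrightarrow> nonmono f e"
    using crit_vertex_coloring[OF assms] by blast
  have "card (forb E f v {}) < k" using forb_card_deg[OF hg, of f v] a by simp
  then have "colorable V E k" using extend_last[OF hg assms(2) f] by blast
  then show False using crit_not_col[OF assms(1)] by blast
qed

lemma crit_low_edges:
  assumes "critical (k+1) V E" "v \<in> V" "degree E v \<le> k"
    and "e1 \<in> E" "e2 \<in> E" "v \<in> e1" "v \<in> e2" "e1 \<noteq> e2"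
  shows "e1 \<inter> e2 = {v}"
proof (rule ccontr)
  assume a: "e1 \<inter> e2 \<noteq> {v}"
  then obtain u where u: "u \<in> e1" "u \<in> e2" "u \<noteq> v" using assms by blast
  have hg: "hypergraph V E" using crit_hg[OF assms(1)] .
  obtain f where f: "f ` (V - {v}) \<subseteq> {..<k}" "\<forall>e\<in>E. v \<notin> e \<longrightarrow> nonmono f e"
    using crit_vertex_coloring[OF assms(1,2)] by blast
  have "card (forb E f v {}) < degree E v"
    using forb_lt_two[OF hg assms(4,6) assms(5,7,8) u(1,2,3,3)] by simp
  then have "colorable V E k" using extend_last[OF hg assms(2) f] assms(3) by simp
  then show False using crit_not_col[OF assms(1)] by blast
qed

lemma crit_connected:
  assumes "critical (k+1) V E" "A \<subseteq> V" "\<forall>e\<in>E. e \<subseteq> A \<or> e \<subseteq> V - A"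
  shows "A = {} \<or> A = V"
proof (rule ccontr)
  assume a: "\<not> ?thesis"
  have c1: "colorable A {e\<in>E. e \<subseteq> A} k" using crit_induced_col[OF assms(1,2)] a by blast
  have c2: "colorable (V - A) {e\<in>E. e \<subseteq> V - A} k" using crit_induced_col[OF assms(1)] a assms(2) by blast
  obtain f1 where f1: "f1 ` A \<subseteq> {..<k}" "\<forall>e\<in>{e\<in>E. e \<subseteq> A}. nonmono f1 e" using c1 unfolding colorable_iff by blast
  obtain f2 where f2: "f2 ` (V-A) \<subseteq> {..<k}" "\<forall>e\<in>{e\<in>E. e \<subseteq> V-A}. nonmono f2 e" using c2 unfolding colorable_iff by blast
  define f where "f v = (if v \<in> A then f1 v else f2 v)" for v
  have "f ` V \<subseteq> {..<k}" using f1 f2 unfolding f_def by auto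
  moreover have "\<forall>e\<in>E. nonmono f e"
  proof
    fix e assume e: "e \<in> E"
    show "nonmono f e"
    proof (cases "e \<subseteq> A")
      case True
      then have "nonmono f1 e" using f1 e by blast
      then show ?thesis using True unfolding nonmono_def f_def by (metis subsetD)
    next
      case False
      then have "e \<subseteq> V - A" using assms(3) e by blast
      then have "nonmono f2 e" using f2 e by blast
      then show ?thesis using \<open>e \<subseteq> V - A\<close> unfolding nonmono_def f_def by (metis DiffD2 subsetD)
    qed
  qed
  ultimately have "colorable V E k" unfolding colorable_iff by blast
  then show False using crit_not_col[OF assms(1)] by blast
qed




inductive good :: "'a set \<Rightarrow> 'a set set \<Rightarrow> 'a set \<Rightarrow> 'a \<Rightarrow> 'a set \<Rightarrow> bool" for V E X z where
  base: "good V E X z {z}"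
| step: "good V E X z U \<Longrightarrow> w \<in> V \<Longrightarrow> w \<notin> X \<Longrightarrow> w \<notin> U \<Longrightarrow> e \<in> E \<Longrightarrow> w \<in> e \<Longrightarrow> u \<in> e \<Longrightarrow> u \<in> U
     \<Longrightarrow> good V E X z (insert w U)"

lemma good_sub: "good V E X z U \<Longrightarrow> z \<in> V - X \<Longrightarrow> z \<in> U \<and> U \<subseteq> V - X"
  by (induction rule: good.induct) auto

lemma good_color:
  assumes "good V E X z U"
    and hg: "hypergraph V E" and z: "z \<in> V - X"
    and deg: "\<forall>w\<in>V-X. degree E w \<le> k"
    and key: "\<forall>f. (\<forall>v\<in>X. f v = f0 v) \<longrightarrow> card (forb E f z {}) < k"
  shows "\<forall>f. f ` (V - U) \<subseteq> {..<k} \<longrightarrow> (\<forall>v\<in>X. f v = f0 v) \<longrightarrow> (\<forall>e\<in>E. e \<inter> U = {} \<longrightarrow> nonmono f e)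
     \<longrightarrow> colorable V E k"
  using assms(1)
proof (induction rule: good.induct)
  case base
  show ?case
  proof (intro allI impI)
    fix f assume f: "f ` (V - {z}) \<subseteq> {..<k}" "\<forall>v\<in>X. f v = f0 v" "\<forall>e\<in>E. e \<inter> {z} = {} \<longrightarrow> nonmono f e"
    have ok: "\<forall>e\<in>E. z \<notin> e \<longrightarrow> nonmono f e" using f(3) by blast
    show "colorable V E k" using extend_last[OF hg _ f(1) ok] key f(2) z by blast
  qed
next
  case (step U w e u)
  show ?case
  proof (intro allI impI)
    fix f assume f: "f ` (V - insert w U) \<subseteq> {..<k}" "\<forall>v\<in>X. f v = f0 v"
      "\<forall>e\<in>E. e \<inter> insert w U = {} \<longrightarrow> nonmono f e"
    have fin: "finite {e\<in>E. w \<in> e}" using degree_fin[OF hg] .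
    have sub: "{e\<in>E. w \<in> e \<and> e \<inter> U = {}} \<subseteq> {e\<in>E. w \<in> e} - {e}" using step by blast
    have "card {e\<in>E. w \<in> e \<and> e \<inter> U = {}} < degree E w"
    proof -
      have "card {e\<in>E. w \<in> e \<and> e \<inter> U = {}} \<le> card ({e\<in>E. w \<in> e} - {e})"
        using card_mono[OF _ sub] fin by blast
      also have "\<dots> < card {e\<in>E. w \<in> e}" by (rule card_Diff1_less[OF fin]) (use step in blast)
      finally show ?thesis unfolding degree_def .
    qed
    moreover have "degree E w \<le> k" using deg step by blast
    ultimately have "card (forb E f w U) < k" using forb_card[OF hg, of f w U] by linarith
    then obtain c where c: "c < k" "c \<notin> forb E f w U" using free_color forb_finite[OF hg] by blast
    have ok: "\<forall>e\<in>E. e \<inter> U = {} \<longrightarrow> nonmono (f(w:=c)) e" using extend_vertex[OF hg c(2) f(3)] .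
    have rng: "(f(w:=c)) ` (V - U) \<subseteq> {..<k}" using f(1) c(1) by auto
    have agr: "\<forall>v\<in>X. (f(w:=c)) v = f0 v" using f(2) step by auto
    show "colorable V E k" using step.IH rng agr ok by blast
  qed
qed

lemma greedy:
  assumes hg: "hypergraph V E" and X: "X \<subseteq> V" and z: "z \<in> V - X"
    and f0: "f0 ` X \<subseteq> {..<k}" "\<forall>e\<in>E. e \<subseteq> X \<longrightarrow> nonmono f0 e"
    and deg: "\<forall>w\<in>V-X. degree E w \<le> k"
    and key: "\<forall>f. (\<forall>v\<in>X. f v = f0 v) \<longrightarrow> card (forb E f z {}) < k"
  shows "colorable V E k \<or> (\<exists>U. z \<in> U \<and> U \<subseteq> V - X \<and> U \<noteq> V - X \<and> (\<forall>e\<in>E. e \<subseteq> U \<union> X \<or> e \<subseteq> V - U))"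
proof -
  have finV: "finite V" using hg unfolding hypergraph_def by blast
  have bnd: "\<forall>U. good V E X z U \<longrightarrow> card U < Suc (card V)"
    using good_sub[OF _ z] finV by (metis Diff_subset card_mono le_imp_less_Suc order_trans)
  obtain U where U: "good V E X z U" "\<forall>U'. good V E X z U' \<longrightarrow> card U' \<le> card U"
    using ex_has_greatest_nat[of "good V E X z" "{z}" card, OF good.base bnd] by blast
  have Us: "z \<in> U" "U \<subseteq> V - X" using good_sub[OF U(1) z] by auto
  have finU: "finite U" using Us finV by (meson finite_Diff finite_subset)
  show ?thesis
  proof (cases "U = V - X")
    case True
    have a1: "f0 ` (V - U) \<subseteq> {..<k}" using True X f0(1) by auto
    have a2: "\<forall>v\<in>X. f0 v = f0 v" by simp
    have a3: "\<forall>e\<in>E. e \<inter> U = {} \<longrightarrow> nonmono f0 e"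
        using True f0(2) hg_edge_sub[OF hg] by blast
    have "colorable V E k" using good_color[OF U(1) hg z deg key] a1 a2 a3 by blast
    then show ?thesis by blast
  next
    case False
    have "\<forall>e\<in>E. e \<subseteq> U \<union> X \<or> e \<subseteq> V - U"
    proof
      fix e assume e: "e \<in> E"
      show "e \<subseteq> U \<union> X \<or> e \<subseteq> V - U"
      proof (rule ccontr)
        assume a: "\<not> ?thesis"
        then obtain u where u: "u \<in> e" "u \<in> U" using hg_edge_sub[OF hg e] by blast
        obtain w where w: "w \<in> e" "w \<notin> U" "w \<notin> X" using a by blast
        have "w \<in> V" using hg_edge_sub[OF hg e] w by blast
        have "good V E X z (insert w U)" using good.step[OF U(1) \<open>w\<in>V\<close> w(3) w(2) e w(1) u] .
        then have "card (insert w U) \<le> card U" using U(2) by blast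
        then show False using finU w(2) by simp
      qed
    qed
    then show ?thesis using Us False by blast
  qed
qed




lemma sub2_eq: assumes "e \<subseteq> {a,b}" "card e \<ge> 2" shows "e = {a,b}"
proof (rule ccontr)
  assume "e \<noteq> {a,b}"
  then have "e \<subset> {a,b}" using assms(1) by blast
  then have "card e < card {a,b}" by (meson psubset_card_mono finite.emptyI finite.insertI)
  also have "\<dots> \<le> 2" by (simp add: card_insert_le_m1)
  finally show False using assms(2) by simp
qed

lemma no_sub_pair: assumes "hypergraph V E" "{a,b} \<notin> E" "e \<in> E" shows "\<not> e \<subseteq> {a,b}"
proof
  assume "e \<subseteq> {a,b}"
  then have "e = {a,b}" by (rule sub2_eq[OF _ hg_edge_card[OF assms(1,3)]])
  then show False using assms by simp
qed

lemma no_sub_pair': "hypergraph V E \<Longrightarrow> {a,b} \<notin> E \<Longrightarrow> \<forall>e\<in>E. e \<subseteq> {a,b} \<longrightarrow> P e"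
  using no_sub_pair by metis

lemma sep_from_split:
  assumes hg: "hypergraph V E" and X: "X \<subseteq> V" "card X = 2" and U: "U \<subseteq> V - X" "U \<noteq> {}" "U \<noteq> V - X"
    and sp: "\<forall>e\<in>E. e \<subseteq> U \<union> X \<or> e \<subseteq> V - U"
  shows "separating_set V E X"
proof -
  have finV: "finite V" using hg unfolding hypergraph_def by blast
  have finU: "finite U" using U finV by (meson finite_Diff finite_subset)
  have finX: "finite X" using X finV finite_subset by blast
  have "card (U \<union> X) = card U + card X" using U(1) finU finX by (subst card_Un_disjoint) auto
  moreover have "card U \<ge> 1" using U(2) finU by (simp add: Suc_leI card_gt_0_iff)
  ultimately have c1: "card (U \<union> X) > card X" using X by linarith
  obtain w where w: "w \<in> V - X" "w \<notin> U" using U by blast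
  have "insert w X \<subseteq> V - U" using X U w by blast
  then have "card (insert w X) \<le> card (V - U)" using finV by (simp add: card_mono)
  moreover have "card (insert w X) = card X + 1" using w finX by simp
  ultimately have c2: "card (V - U) > card X" by linarith
  show ?thesis unfolding separating_set_def
    apply (rule exI[of _ "U \<union> X"], rule exI[of _ "V - U"])
    using X U c1 c2 sp by auto
qed

locale G1 =
  fixes V :: "'a set" and E :: "'a set set" and k :: nat and h :: 'a
  assumes crit: "critical (k+1) V E" and k2: "k \<ge> 2" and hV: "h \<in> V"
    and low: "\<forall>v\<in>V-{h}. degree E v = k" and high: "degree E h \<ge> k+1"
    and nosep: "\<not> (\<exists>S. card S = 2 \<and> separating_set V E S)"
begin

lemma hg: "hypergraph V E" using crit_hg[OF crit] .

lemma caseA: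
  assumes z: "z \<in> V" "z \<noteq> h" and eh: "eh \<in> E" "h \<in> eh" "z \<in> eh"
    and f: "f \<in> E" "z \<in> f" "h \<notin> f" "y \<in> f" "y \<noteq> z"
  shows "{h,y} \<in> E"
proof (rule ccontr)
  assume nE: "{h,y} \<notin> E"
  have yh: "y \<noteq> h" using f by blast
  have yV: "y \<in> V" using hg_edge_sub[OF hg f(1)] f by blast
  let ?X = "{h,y}"
  have X: "?X \<subseteq> V" using hV yV by blast
  have zX: "z \<in> V - ?X" using z f by blast
  have f0: "(\<lambda>_. 0::nat) ` ?X \<subseteq> {..<k}" using k2 by auto
  have f0e: "\<forall>e\<in>E. e \<subseteq> ?X \<longrightarrow> nonmono (\<lambda>_. 0) e"
    using no_sub_pair'[OF hg nE] .
  have deg: "\<forall>w\<in>V-?X. degree E w \<le> k" using low by auto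
  have "eh \<noteq> f" using eh f by blast
  have key: "\<forall>g. (\<forall>v\<in>?X. g v = (\<lambda>_. 0) v) \<longrightarrow> card (forb E g z {}) < k"
  proof (intro allI impI)
    fix g assume "\<forall>v\<in>?X. g v = (\<lambda>_. 0::nat) v"
    then have "g h = g y" by simp
    then have "card (forb E g z {}) < degree E z"
      using forb_lt_two[OF hg eh(1,3) f(1,2) \<open>eh \<noteq> f\<close> eh(2) f(4)] z f by auto
    then show "card (forb E g z {}) < k" using low z by auto
  qed
  from greedy[OF hg X zX f0 f0e deg key]
  show False
  proof
    assume "colorable V E k" then show False using crit_not_col[OF crit] by blast
  next
    assume "\<exists>U. z \<in> U \<and> U \<subseteq> V - ?X \<and> U \<noteq> V - ?X \<and> (\<forall>e\<in>E. e \<subseteq> U \<union> ?X \<or> e \<subseteq> V - U)"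
    then obtain U where U: "z \<in> U" "U \<subseteq> V - ?X" "U \<noteq> V - ?X" "\<forall>e\<in>E. e \<subseteq> U \<union> ?X \<or> e \<subseteq> V - U" by blast
    have "card ?X = 2" using yh by simp
    then have "separating_set V E ?X" using sep_from_split[OF hg X _ U(2) _ U(3) U(4)] U(1) by blast
    then show False using nosep \<open>card ?X = 2\<close> by blast
  qed
qed

lemma claim2: assumes "v \<in> V" "v \<noteq> h" shows "\<exists>e\<in>E. h \<in> e \<and> v \<in> e"
proof -
  define A where "A = {v\<in>V. v \<noteq> h \<and> \<not>(\<exists>e\<in>E. h \<in> e \<and> v \<in> e)}"
  have "\<forall>e\<in>E. e \<subseteq> A \<or> e \<subseteq> V - A"
  proof
    fix e assume e: "e \<in> E"
    show "e \<subseteq> A \<or> e \<subseteq> V - A"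
    proof (rule ccontr)
      assume "\<not> ?thesis"
      then obtain w u where wu: "w \<in> e" "w \<in> A" "u \<in> e" "u \<notin> A" using hg_edge_sub[OF hg e] by blast
      have he: "h \<notin> e" using wu e unfolding A_def by blast
      have uV: "u \<in> V" using hg_edge_sub[OF hg e] wu by blast
      have uh: "u \<noteq> h" using he wu by blast
      then obtain eh where eh: "eh \<in> E" "h \<in> eh" "u \<in> eh" using wu uV unfolding A_def by blast
      have "w \<noteq> u" using wu by blast
      have "{h,w} \<in> E" using caseA[OF uV uh eh e wu(3) he wu(1) \<open>w \<noteq> u\<close>] .
      then show False using wu unfolding A_def by blast
    qed
  qed
  then have "A = {} \<or> A = V" using crit_connected[OF crit, of A] unfolding A_def by blast
  moreover have "h \<notin> A" unfolding A_def by blast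
  ultimately have "A = {}" using hV by blast
  then show ?thesis using assms unfolding A_def by blast
qed

lemma claim3: assumes "e \<in> E" "h \<notin> e" "w \<in> e" shows "{h,w} \<in> E"
proof -
  obtain u where u: "u \<in> e" "u \<noteq> w" using hg_other[OF hg assms(1)] by blast
  have uV: "u \<in> V" using hg_edge_sub[OF hg assms(1)] u by blast
  have uh: "u \<noteq> h" using u assms by blast
  obtain eh where eh: "eh \<in> E" "h \<in> eh" "u \<in> eh" using claim2[OF uV uh] by blast
  show ?thesis using caseA[OF uV uh eh assms(1) u(1) assms(2,3)] u by blast
qed

lemma claim4: assumes "v \<in> V" "v \<noteq> h" shows "{h,v} \<in> E"
proof -
  obtain eh where eh: "eh \<in> E" "h \<in> eh" "v \<in> eh" using claim2[OF assms] by blast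
  have dk: "card {e\<in>E. v \<in> e} = k" using low assms unfolding degree_def by auto
  have "\<exists>f\<in>E. v \<in> f \<and> f \<noteq> eh"
  proof (rule ccontr)
    assume "\<not> ?thesis"
    then have "{e\<in>E. v \<in> e} \<subseteq> {eh}" by blast
    then have "card {e\<in>E. v \<in> e} \<le> 1" by (metis card.empty card.insert empty_iff finite.emptyI le_SucI card_mono subset_singletonD order_refl One_nat_def)
    then show False using dk k2 by simp
  qed
  then obtain f where f: "f \<in> E" "v \<in> f" "f \<noteq> eh" by blast
  show ?thesis
  proof (cases "h \<in> f")
    case True
    have "degree E v \<le> k" using low assms by simp
    then have "eh \<inter> f = {v}" using crit_low_edges[OF crit assms(1) _ eh(1) f(1) eh(3) f(2) f(3)[symmetric]] by simp
    moreover have "h \<in> eh \<inter> f" using True eh(2) by simp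
    ultimately have "h = v" by simp
    then show ?thesis using assms(2) by simp
  next
    case False then show ?thesis using claim3[OF f(1) False f(2)] by blast
  qed
qed

lemma claim5: assumes "e \<in> E" "h \<in> e" shows "\<exists>v\<in>V. v \<noteq> h \<and> e = {h,v}"
proof -
  obtain v where v: "v \<in> e" "v \<noteq> h" using hg_other[OF hg assms(1)] by blast
  have vV: "v \<in> V" using hg_edge_sub[OF hg assms(1)] v by blast
  have hv: "{h,v} \<in> E" using claim4[OF vV v(2)] .
  have "e = {h,v}"
  proof (rule ccontr)
    assume ne: "e \<noteq> {h,v}"
    have dv: "degree E v \<le> k" using low vV v by simp
    have "v \<in> {h,v}" by simp
    then have ev: "e \<inter> {h,v} = {v}" using crit_low_edges[OF crit vV dv assms(1) hv v(1) _ ne] by blast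
    have "h \<in> e \<inter> {h,v}" using assms(2) by simp
    then show False using ev v(2) by simp
  qed
  then show ?thesis using vV v by blast
qed

definition EH where "EH = {e\<in>E. h \<notin> e}"
definition L where "L = V - {h}"

lemma E_decomp: "E = EH \<union> {{h,v} | v. v \<in> L}"
  using claim4 claim5 unfolding EH_def L_def by blast

lemma card_L: "card L \<ge> k + 1"
proof -
  have "{e\<in>E. h \<in> e} \<subseteq> (\<lambda>v. {h,v}) ` L" using claim5 unfolding L_def by blast
  moreover have "finite L" using hg unfolding hypergraph_def L_def by blast
  ultimately have "card {e\<in>E. h \<in> e} \<le> card L" using card_sub_image by blast
  then show ?thesis using high unfolding degree_def by simp
qed

lemma hg_H: "hypergraph L EH"
  using hg unfolding hypergraph_def EH_def L_def by auto

lemma EH_edges: "e \<in> EH \<Longrightarrow> e \<in> E \<and> h \<notin> e" unfolding EH_def by blast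

lemma deg_H: assumes "v \<in> L" shows "degree EH v = k - 1"
proof -
  have vV: "v \<in> V" "v \<noteq> h" using assms unfolding L_def by auto
  have hv: "{h,v} \<in> E" using claim4[OF vV] .
  have "{e\<in>EH. v \<in> e} = {e\<in>E. v \<in> e} - {{h,v}}"
  proof
    show "{e\<in>EH. v \<in> e} \<subseteq> {e\<in>E. v \<in> e} - {{h,v}}" unfolding EH_def by auto
    show "{e\<in>E. v \<in> e} - {{h,v}} \<subseteq> {e\<in>EH. v \<in> e}"
    proof
      fix e assume e: "e \<in> {e\<in>E. v \<in> e} - {{h,v}}"
      have "h \<notin> e"
      proof
        assume "h \<in> e"
        then obtain u where "e = {h,u}" "u \<noteq> h" using claim5 e by blast
        then show False using e vV by auto
      qed
      then show "e \<in> {e\<in>EH. v \<in> e}" using e unfolding EH_def by blast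
    qed
  qed
  moreover have "finite {e\<in>E. v \<in> e}" using degree_fin[OF hg] .
  ultimately have "card {e\<in>EH. v \<in> e} = card {e\<in>E. v \<in> e} - 1" using hv by (simp add: card_Diff_singleton)
  then show ?thesis using low vV unfolding degree_def by auto
qed

lemma H_low_edges:
  assumes "e1 \<in> EH" "e2 \<in> EH" "v \<in> e1" "v \<in> e2" "e1 \<noteq> e2" shows "e1 \<inter> e2 = {v}"
proof -
  have E: "e1 \<in> E" "h \<notin> e1" "e2 \<in> E" using assms(1,2) unfolding EH_def by auto
  have vV: "v \<in> V" using hg_edge_sub[OF hg E(1)] assms(3) by blast
  have "v \<noteq> h" using E(2) assms(3) by blast
  then have "degree E v \<le> k" using low vV by simp
  then show ?thesis using crit_low_edges[OF crit vV _ E(1) E(3) assms(3,4,5)] by simp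
qed

lemma H_not_col: "\<not> colorable L EH (k-1)"
proof
  assume "colorable L EH (k-1)"
  then obtain f where f: "f ` L \<subseteq> {..<k-1}" "\<forall>e\<in>EH. nonmono f e" unfolding colorable_iff by blast
  define g where "g v = (if v = h then k - 1 else f v)" for v
  have "g ` V \<subseteq> {..<k}" using f(1) k2 unfolding g_def L_def by auto
  moreover have "\<forall>e\<in>E. nonmono g e"
  proof
    fix e assume e: "e \<in> E"
    show "nonmono g e"
    proof (cases "h \<in> e")
      case True
      then obtain v where v: "v \<in> V" "v \<noteq> h" "e = {h,v}" using claim5 e by blast
      have "f v < k - 1" using f(1) v unfolding L_def by auto
      then have "g h \<noteq> g v" unfolding g_def using v by simp
      then show ?thesis unfolding nonmono_def using v by blast
    next
      case False
      then have "nonmono f e" using f e unfolding EH_def by blast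
      then show ?thesis unfolding nonmono_def g_def using False by metis
    qed
  qed
  ultimately show False using crit_not_col[OF crit] unfolding colorable_iff by blast
qed

lemma H_del_edge: assumes "e \<in> EH" shows "colorable L (EH - {e}) (k-1)"
proof -
  obtain g where g: "g ` V \<subseteq> {..<k}" "\<forall>e'\<in>E - {e}. nonmono g e'"
    using crit_del_edge[OF crit, of e] assms unfolding EH_def colorable_iff by blast
  define c where "c = g h"
  have gv: "g v \<noteq> c" if "v \<in> L" for v
  proof -
    have vV: "v \<in> V" "v \<noteq> h" using that unfolding L_def by auto
    have "{h,v} \<in> E - {e}" using claim4[OF vV] assms unfolding EH_def by auto
    then have "nonmono g {h,v}" using g by blast
    then show ?thesis unfolding nonmono_def c_def by auto
  qed
  define f where "f v = (if g v = k - 1 then c else g v)" for v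
  have "f ` L \<subseteq> {..<k-1}"
  proof
    fix x assume "x \<in> f ` L"
    then obtain v where v: "v \<in> L" "x = f v" by blast
    have "g v < k" "g h < k" using g v(1) hV unfolding L_def by auto
    then show "x \<in> {..<k-1}" using gv[OF v(1)] v(2) unfolding f_def c_def by auto
  qed
  moreover have "\<forall>e'\<in>EH - {e}. nonmono f e'"
  proof
    fix e' assume e': "e' \<in> EH - {e}"
    then have "nonmono g e'" using g unfolding EH_def by blast
    then obtain u w where uw: "u \<in> e'" "w \<in> e'" "g u \<noteq> g w" unfolding nonmono_def by blast
    have "e' \<subseteq> L" using hg_H e' unfolding hypergraph_def by blast
    then have "g u \<noteq> c" "g w \<noteq> c" using gv uw by auto
    then have "f u \<noteq> f w" using uw(3) unfolding f_def by auto
    then show "nonmono f e'" unfolding nonmono_def using uw by blast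
  qed
  ultimately show ?thesis unfolding colorable_iff by blast
qed

end



definition forb2 :: "'a set set \<Rightarrow> ('a \<Rightarrow> nat) \<Rightarrow> 'a \<Rightarrow> 'a \<Rightarrow> nat set" where
  "forb2 E f x y = {c. \<exists>e\<in>E. (x \<in> e \<or> y \<in> e) \<and> (\<forall>u\<in>e-{x,y}. f u = c)}"

lemma R1:
  assumes hg: "hypergraph V E" and f: "f ` V \<subseteq> {..<k}" "\<forall>e\<in>E. nonmono f e"
    and xy: "x \<in> V" "x \<noteq> y" and lt: "card (forb E f x {} \<union> {f y}) < k"
  shows "\<exists>g. g ` V \<subseteq> {..<k} \<and> (\<forall>e\<in>E. nonmono g e) \<and> g x \<noteq> g y"
proof -
  have fin: "finite (forb E f x {} \<union> {f y})" using forb_finite[OF hg] by blast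
  obtain c where c: "c < k" "c \<notin> forb E f x {} \<union> {f y}" using free_color[OF lt fin] by blast
  have "\<forall>e\<in>E. e \<inter> {} = {} \<longrightarrow> nonmono (f(x:=c)) e"
    by (rule extend_vertex[OF hg]) (use c f in auto)
  moreover have "(f(x:=c)) ` V \<subseteq> {..<k}" using f c by auto
  moreover have "(f(x:=c)) x \<noteq> (f(x:=c)) y" using c xy by auto
  ultimately show ?thesis by blast
qed

lemma forb2_card:
  assumes hg: "hypergraph V E" and nxy: "{x,y} \<notin> E"
  shows "card (forb2 E f x y) \<le> card {e\<in>E. x \<in> e \<or> y \<in> e}"
proof -
  let ?S = "{e\<in>E. x \<in> e \<or> y \<in> e}"
  let ?phi = "\<lambda>e. f (SOME u. u \<in> e - {x,y})"
  have fin: "finite ?S" using hg_finite_E[OF hg] by simp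
  have "forb2 E f x y \<subseteq> ?phi ` ?S"
  proof
    fix c assume "c \<in> forb2 E f x y"
    then obtain e where e: "e \<in> E" "x \<in> e \<or> y \<in> e" "\<forall>u\<in>e-{x,y}. f u = c" unfolding forb2_def by blast
    have "\<not> e \<subseteq> {x,y}" using no_sub_pair[OF hg nxy e(1)] .
    then obtain u where "u \<in> e - {x,y}" by blast
    then have "(SOME u. u \<in> e - {x,y}) \<in> e - {x,y}" by (rule someI)
    then have "?phi e = c" using e(3) by blast
    then show "c \<in> ?phi ` ?S" using e by blast
  qed
  then show ?thesis using card_sub_image[OF fin] by blast
qed

lemma R2:
  assumes hg: "hypergraph V E" and f: "f ` V \<subseteq> {..<k}" "\<forall>e\<in>E. nonmono f e"
    and xy: "x \<in> V" "y \<in> V" "{x,y} \<notin> E" and lt: "card {e\<in>E. x \<in> e \<or> y \<in> e} < k"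
  shows "\<exists>g. g ` V \<subseteq> {..<k} \<and> (\<forall>e\<in>E. nonmono g e) \<and> g x = g y"
proof -
  let ?S = "{e\<in>E. x \<in> e \<or> y \<in> e}"
  let ?phi = "\<lambda>e. f (SOME u. u \<in> e - {x,y})"
  have fin: "finite ?S" using hg_finite_E[OF hg] by simp
  have sub: "forb2 E f x y \<subseteq> ?phi ` ?S"
  proof
    fix c assume "c \<in> forb2 E f x y"
    then obtain e where e: "e \<in> E" "x \<in> e \<or> y \<in> e" "\<forall>u\<in>e-{x,y}. f u = c" unfolding forb2_def by blast
    have "\<not> e \<subseteq> {x,y}" using no_sub_pair[OF hg xy(3) e(1)] .
    then obtain u where "u \<in> e - {x,y}" by blast
    then have "(SOME u. u \<in> e - {x,y}) \<in> e - {x,y}" by (rule someI)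
    then have "?phi e = c" using e(3) by blast
    then show "c \<in> ?phi ` ?S" using e by blast
  qed
  then have fin2: "finite (forb2 E f x y)" using fin by (meson finite_imageI finite_subset)
  have "card (forb2 E f x y) \<le> card ?S" using sub card_sub_image[OF fin] by blast
  then obtain c where c: "c < k" "c \<notin> forb2 E f x y" using free_color[OF _ fin2] lt by (meson le_less_trans)
  define g where "g = f(x:=c, y:=c)"
  have "\<forall>e\<in>E. nonmono g e"
  proof
    fix e assume e: "e \<in> E"
    show "nonmono g e"
    proof (cases "x \<in> e \<or> y \<in> e")
      case False
      then show ?thesis using f(2) e unfolding nonmono_def g_def by (metis fun_upd_other)
    next
      case True
      have "\<not> e \<subseteq> {x,y}" using no_sub_pair[OF hg xy(3) e] .
      then obtain u where u: "u \<in> e" "u \<noteq> x" "u \<noteq> y" by blast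
      show ?thesis
      proof (cases "\<forall>v\<in>e-{x,y}. f v = f u")
        case True
        then have "f u \<in> forb2 E f x y" using e \<open>x \<in> e \<or> y \<in> e\<close> unfolding forb2_def by blast
        then have "f u \<noteq> c" using c by auto
        then show ?thesis using u \<open>x \<in> e \<or> y \<in> e\<close> unfolding nonmono_def g_def
          by (metis fun_upd_same fun_upd_other)
      next
        case False
        then obtain v where "v \<in> e" "v \<noteq> x" "v \<noteq> y" "f v \<noteq> f u" by blast
        then show ?thesis using u unfolding nonmono_def g_def by (metis fun_upd_other)
      qed
    qed
  qed
  moreover have "g ` V \<subseteq> {..<k}" using f c unfolding g_def by auto
  moreover have "g x = g y" unfolding g_def by simp
  ultimately show ?thesis by blast
qed

definition sw :: "nat \<Rightarrow> nat \<Rightarrow> nat \<Rightarrow> nat" where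
  "sw a b c = (if c = a then b else if c = b then a else c)"

lemma sw_inj: "sw a b u = sw a b v \<Longrightarrow> u = v" unfolding sw_def by (auto split: if_splits)
lemma sw_rng: "a < k \<Longrightarrow> b < k \<Longrightarrow> c < k \<Longrightarrow> sw a b c < k" unfolding sw_def by auto

lemma nonmono_comp: "nonmono f e \<Longrightarrow> nonmono (sw a b \<circ> f) e"
  unfolding nonmono_def using sw_inj by (metis comp_apply)

lemma glue:
  assumes f1: "f1 ` V1 \<subseteq> {..<k}" "\<forall>e\<in>E1. nonmono f1 e"
    and f2: "f2 ` V2 \<subseteq> {..<k}" "\<forall>e\<in>E2. nonmono f2 e"
    and S: "V1 \<inter> V2 = {x,y}" and E: "\<forall>e\<in>E. (e \<in> E1 \<and> e \<subseteq> V1) \<or> (e \<in> E2 \<and> e \<subseteq> V2)"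
    and eq: "f1 x = f1 y \<longleftrightarrow> f2 x = f2 y"
  shows "colorable (V1 \<union> V2) E k"
proof -
  have xy: "x \<in> V1" "y \<in> V1" "x \<in> V2" "y \<in> V2" using S by auto
  define g1 where "g1 = sw (f2 x) (f1 x) \<circ> f2"
  have g1x: "g1 x = f1 x" unfolding g1_def sw_def by simp
  define g2 where "g2 = sw (g1 y) (f1 y) \<circ> g1"
  have g2xy: "g2 x = f1 x \<and> g2 y = f1 y"
  proof (cases "f1 x = f1 y")
    case True
    then have "f2 x = f2 y" using eq by simp
    then have "g1 y = f1 y" using g1x True unfolding g1_def by simp
    then show ?thesis using g1x unfolding g2_def sw_def by simp
  next
    case False
    then have "f2 x \<noteq> f2 y" using eq by simp
    then have "g1 y \<noteq> f1 x" using g1x unfolding g1_def comp_def by (metis sw_inj)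
    then show ?thesis using g1x False unfolding g2_def sw_def by auto
  qed
  have g2rng: "g2 ` V2 \<subseteq> {..<k}"
  proof -
    have "f1 x < k" "f1 y < k" "f2 x < k" using f1 f2 xy by auto
    moreover have "g1 ` V2 \<subseteq> {..<k}" using f2(1) unfolding g1_def using sw_rng calculation by auto
    moreover then have "g1 y < k" using xy by auto
    ultimately show ?thesis unfolding g2_def using sw_rng by auto
  qed
  have g2ok: "\<forall>e\<in>E2. nonmono g2 e" using f2(2) nonmono_comp unfolding g2_def g1_def
    by (metis comp_assoc)
  define g where "g v = (if v \<in> V1 then f1 v else g2 v)" for v
  have "g ` (V1 \<union> V2) \<subseteq> {..<k}" using f1 g2rng unfolding g_def by auto
  moreover have "\<forall>e\<in>E. nonmono g e"
  proof
    fix e assume e: "e \<in> E"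
    show "nonmono g e"
    proof (cases "e \<in> E1 \<and> e \<subseteq> V1")
      case True
      then show ?thesis using f1(2) unfolding nonmono_def g_def by (metis subsetD)
    next
      case False
      then have e2: "e \<in> E2" "e \<subseteq> V2" using E e by auto
      have "\<forall>v\<in>e. g v = g2 v"
      proof
        fix v assume "v \<in> e"
        show "g v = g2 v"
        proof (cases "v \<in> V1")
          case True then have "v \<in> {x,y}" using S e2 \<open>v\<in>e\<close> by blast
          then show ?thesis using g2xy True unfolding g_def by auto
        qed (simp add: g_def)
      qed
      then show ?thesis using g2ok e2 unfolding nonmono_def by metis
    qed
  qed
  ultimately show ?thesis unfolding colorable_iff by blast
qed


lemma card1_sub: "finite A \<Longrightarrow> card A \<le> 1 \<Longrightarrow> a \<in> A \<Longrightarrow> A = {a}"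
  using card_le_Suc0_iff_eq[of A] by auto

lemma dirac_core:
  assumes hA: "hypergraph VA EA" and hB: "hypergraph VB EB"
    and xy: "x \<in> VA" "y \<in> VA" "x \<in> VB" "y \<in> VB" "x \<noteq> y"
    and fA: "fA ` VA \<subseteq> {..<k}" "\<forall>e\<in>EA. nonmono fA e" "fA x = fA y"
    and fB: "fB ` VB \<subseteq> {..<k}" "\<forall>e\<in>EB. nonmono fB e" "fB x \<noteq> fB y"
    and noglue: "\<And>gA gB. gA ` VA \<subseteq> {..<k} \<Longrightarrow> \<forall>e\<in>EA. nonmono gA e \<Longrightarrow> gB ` VB \<subseteq> {..<k}
        \<Longrightarrow> \<forall>e\<in>EB. nonmono gB e \<Longrightarrow> (gA x = gA y \<longleftrightarrow> gB x = gB y) \<Longrightarrow> False"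
    and dx: "card {e\<in>EA. x \<in> e} + card {e\<in>EB. x \<in> e} \<le> k"
    and dy: "card {e\<in>EA. y \<in> e} + card {e\<in>EB. y \<in> e} \<le> k"
    and nB: "{x,y} \<notin> EB" and k2: "k \<ge> 2"
    and cond: "k \<ge> 3 \<or> (\<exists>e. (e\<in>EA \<or> e\<in>EB) \<and> x\<in>e \<and> y\<in>e \<and> card e \<ge> 3)"
  shows False
proof -
  have finA: "finite EA" using hg_finite_E[OF hA] .
  have finB: "finite EB" using hg_finite_E[OF hB] .
  have cx: "card (forb EA fA x {} \<union> {fA y}) \<ge> k"
  proof (rule ccontr)
    assume "\<not> ?thesis"
    then obtain g where "g ` VA \<subseteq> {..<k}" "\<forall>e\<in>EA. nonmono g e" "g x \<noteq> g y"
      using R1[OF hA fA(1,2) xy(1) xy(5)] by auto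
    then show False using noglue[OF _ _ fB(1,2)] fB(3) by blast
  qed
  have cy: "card (forb EA fA y {} \<union> {fA x}) \<ge> k"
  proof (rule ccontr)
    assume "\<not> ?thesis"
    then obtain g where "g ` VA \<subseteq> {..<k}" "\<forall>e\<in>EA. nonmono g e" "g y \<noteq> g x"
      using R1[OF hA fA(1,2) xy(2), of x] xy(5) by auto
    then show False using noglue[OF _ _ fB(1,2)] fB(3) by metis
  qed
  have cB: "card {e\<in>EB. x \<in> e \<or> y \<in> e} \<ge> k"
  proof (rule ccontr)
    assume "\<not> ?thesis"
    then obtain g where "g ` VB \<subseteq> {..<k}" "\<forall>e\<in>EB. nonmono g e" "g x = g y"
      using R2[OF hB fB(1,2) xy(3,4) nB] by auto
    then show False using noglue[OF fA(1,2)] fA(3) by blast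
  qed
  have b1: "card (forb EA fA x {} \<union> {fA y}) \<le> card {e\<in>EA. x \<in> e} + 1"
    using card_Un_le[of "forb EA fA x {}" "{fA y}"] forb_card_deg[OF hA, of fA x] unfolding degree_def by simp
  have b2: "card (forb EA fA y {} \<union> {fA x}) \<le> card {e\<in>EA. y \<in> e} + 1"
    using card_Un_le[of "forb EA fA y {}" "{fA x}"] forb_card_deg[OF hA, of fA y] unfolding degree_def by simp
  have "{e\<in>EB. x \<in> e \<or> y \<in> e} = {e\<in>EB. x \<in> e} \<union> {e\<in>EB. y \<in> e}" by blast
  then have b3: "card {e\<in>EB. x \<in> e \<or> y \<in> e} \<le> card {e\<in>EB. x \<in> e} + card {e\<in>EB. y \<in> e}"
    using card_Un_le[of "{e\<in>EB. x \<in> e}" "{e\<in>EB. y \<in> e}"] by simp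
  have k22: "k = 2" using cx cy cB b1 b2 b3 dx dy cond k2 by linarith
  then obtain e where e: "e\<in>EA \<or> e\<in>EB" "x\<in>e" "y\<in>e" "card e \<ge> 3" using cond by auto
  have dAx: "card {e\<in>EA. x \<in> e} \<le> 1" and dBx: "card {e\<in>EB. x \<in> e} \<le> 1" and dBy: "card {e\<in>EB. y \<in> e} \<le> 1"
    using cx cy cB b1 b2 b3 dx dy k22 by linarith+
  show False
  proof (cases "e \<in> EA")
    case True
    have one: "{e'\<in>EA. x \<in> e'} = {e}" using card1_sub[OF _ dAx] finA True e by auto
    have "forb EA fA x {} \<subseteq> {fA y}"
    proof
      fix c assume "c \<in> forb EA fA x {}"
      then obtain e' where e': "e' \<in> EA" "x \<in> e'" "\<forall>u\<in>e'-{x}. fA u = c" unfolding forb_def by blast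
      then have "e' = e" using one by blast
      then have "fA y = c" using e'(3) e(3) xy(5) by blast
      then show "c \<in> {fA y}" by simp
    qed
    then have "forb EA fA x {} \<union> {fA y} = {fA y}" by blast
    then have "card (forb EA fA x {} \<union> {fA y}) = card {fA y}" by (rule arg_cong)
    then show False using cx k22 by simp
  next
    case False
    then have eB: "e \<in> EB" using e by blast
    have "{e'\<in>EB. x \<in> e'} = {e}" using card1_sub[OF _ dBx] finB eB e by auto
    moreover have "{e'\<in>EB. y \<in> e'} = {e}" using card1_sub[OF _ dBy] finB eB e by auto
    ultimately have "{e\<in>EB. x \<in> e \<or> y \<in> e} = {e}" by blast
    then show False using cB k22 by simp
  qed
qed




context G1 begin

lemma L_edge: assumes "v \<in> L" shows "\<exists>e\<in>EH. v \<in> e"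
proof -
  have "card {e\<in>EH. v \<in> e} = k - 1" using deg_H[OF assms] unfolding degree_def .
  then have "{e\<in>EH. v \<in> e} \<noteq> {}" using k2 by (metis card.empty diff_is_0_eq numeral_le_one_iff semiring_norm(69) Suc_1 Suc_le_eq not_less_eq_eq)
  then show ?thesis by blast
qed

lemma induced_col:
  assumes "W \<subseteq> L" "w \<in> L" "w \<notin> W"
  shows "\<exists>f. f ` W \<subseteq> {..<k-1} \<and> (\<forall>e\<in>{e\<in>EH. e \<subseteq> W}. nonmono f e)"
proof -
  obtain e where e: "e \<in> EH" "w \<in> e" using L_edge[OF assms(2)] by blast
  obtain g where g: "g ` L \<subseteq> {..<k-1}" "\<forall>e'\<in>EH - {e}. nonmono g e'"
    using H_del_edge[OF e(1)] unfolding colorable_iff by blast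
  have "g ` W \<subseteq> {..<k-1}" using g(1) assms(1) by auto
  moreover have "\<forall>e'\<in>{e\<in>EH. e \<subseteq> W}. nonmono g e'" using g(2) e assms(3) by auto
  ultimately show ?thesis by blast
qed

lemma H_dirac:
  assumes X: "x \<in> L" "y \<in> L" "x \<noteq> y" "{x,y} \<notin> EH"
    and U: "U \<subseteq> L - {x,y}" "U \<noteq> {}" "U \<noteq> L - {x,y}"
    and sp: "\<forall>e\<in>EH. e \<subseteq> U \<union> {x,y} \<or> e \<subseteq> L - U"
    and k3: "k - 1 \<ge> 2"
    and cond: "k - 1 \<ge> 3 \<or> (\<exists>e\<in>EH. x\<in>e \<and> y\<in>e \<and> card e \<ge> 3)"
  shows False
proof -
  define V1 where "V1 = U \<union> {x,y}"
  define V2 where "V2 = L - U"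
  define E1 where "E1 = {e\<in>EH. e \<subseteq> V1}"
  define E2 where "E2 = {e\<in>EH. e \<subseteq> V2}"
  have V1L: "V1 \<subseteq> L" and V2L: "V2 \<subseteq> L" using U X unfolding V1_def V2_def by auto
  have h1: "hypergraph V1 E1" unfolding E1_def using induced_hg[OF hg_H V1L] .
  have h2: "hypergraph V2 E2" unfolding E2_def using induced_hg[OF hg_H V2L] .
  have I: "V1 \<inter> V2 = {x,y}" using U X unfolding V1_def V2_def by auto
  have Un: "V1 \<union> V2 = L" using U X unfolding V1_def V2_def by auto
  have Ecov: "\<forall>e\<in>EH. (e \<in> E1 \<and> e \<subseteq> V1) \<or> (e \<in> E2 \<and> e \<subseteq> V2)"
    using sp unfolding E1_def E2_def V1_def V2_def by blast
  obtain w where w: "w \<in> L - {x,y}" "w \<notin> U" using U by blast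
  obtain u where u: "u \<in> U" using U by blast
  obtain f1 where f1: "f1 ` V1 \<subseteq> {..<k-1}" "\<forall>e\<in>E1. nonmono f1 e"
    using induced_col[OF V1L, of w] w unfolding V1_def E1_def by auto
  obtain f2 where f2: "f2 ` V2 \<subseteq> {..<k-1}" "\<forall>e\<in>E2. nonmono f2 e"
    using induced_col[OF V2L, of u] u U unfolding V2_def E2_def by auto
  have noglue: False if "g1 ` V1 \<subseteq> {..<k-1}" "\<forall>e\<in>E1. nonmono g1 e" "g2 ` V2 \<subseteq> {..<k-1}"
      "\<forall>e\<in>E2. nonmono g2 e" "g1 x = g1 y \<longleftrightarrow> g2 x = g2 y" for g1 g2
    using glue[OF that(1,2,3,4) I Ecov that(5)] Un H_not_col by simp
  have noglue': False if "g2 ` V2 \<subseteq> {..<k-1}" "\<forall>e\<in>E2. nonmono g2 e" "g1 ` V1 \<subseteq> {..<k-1}"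
      "\<forall>e\<in>E1. nonmono g1 e" "g2 x = g2 y \<longleftrightarrow> g1 x = g1 y" for g1 g2
    using noglue[OF that(3,4,1,2)] that(5) by blast
  have disj: "{e\<in>E1. v \<in> e} \<inter> {e\<in>E2. v \<in> e} = {}" for v
  proof -
    have "e \<notin> E1 \<or> e \<notin> E2" for e
    proof (rule ccontr)
      assume "\<not> ?thesis"
      then have "e \<in> EH" "e \<subseteq> {x,y}" using I unfolding E1_def E2_def by auto
      then show False using no_sub_pair[OF hg_H X(4)] by blast
    qed
    then show ?thesis by blast
  qed
  have dv: "card {e\<in>E1. v \<in> e} + card {e\<in>E2. v \<in> e} \<le> k - 1" if "v \<in> L" for v
  proof -
    have fE: "finite EH" using hg_finite_E[OF hg_H] .
    have "card {e\<in>E1. v \<in> e} + card {e\<in>E2. v \<in> e} = card ({e\<in>E1. v \<in> e} \<union> {e\<in>E2. v \<in> e})"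
      using disj fE unfolding E1_def E2_def by (subst card_Un_disjoint) auto
    also have "\<dots> \<le> card {e\<in>EH. v \<in> e}" using fE unfolding E1_def E2_def by (intro card_mono) auto
    finally show ?thesis using deg_H[OF that] unfolding degree_def by simp
  qed
  have xyV: "x \<in> V1" "y \<in> V1" "x \<in> V2" "y \<in> V2" using I by auto
  have n1: "{x,y} \<notin> E1" and n2: "{x,y} \<notin> E2" using X(4) unfolding E1_def E2_def by auto
  have cond': "k-1 \<ge> 3 \<or> (\<exists>e. (e\<in>E1 \<or> e\<in>E2) \<and> x\<in>e \<and> y\<in>e \<and> card e \<ge> 3)"
    using cond Ecov by blast
  have cond'': "k-1 \<ge> 3 \<or> (\<exists>e. (e\<in>E2 \<or> e\<in>E1) \<and> x\<in>e \<and> y\<in>e \<and> card e \<ge> 3)"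
    using cond' by blast
  show False
  proof (cases "f1 x = f1 y")
    case True
    show False
    proof (cases "f2 x = f2 y")
      case True then show False using noglue[OF f1 f2] \<open>f1 x = f1 y\<close> by blast
    next
      case False
      show False
        by (rule dirac_core[OF h1 h2 xyV X(3) f1 True f2 False noglue dv[OF X(1)] dv[OF X(2)] n2 k3 cond'])
    qed
  next
    case False
    show False
    proof (cases "f2 x = f2 y")
      case False then show False using noglue[OF f1 f2] \<open>f1 x \<noteq> f1 y\<close> by blast
    next
      case True
      have d1: "card {e\<in>E2. v \<in> e} + card {e\<in>E1. v \<in> e} \<le> k - 1" if "v \<in> L" for v
        using dv[OF that] by simp
      show False
        by (rule dirac_core[OF h2 h1 xyV(3,4,1,2) X(3) f2 True f1 False noglue' d1[OF X(1)] d1[OF X(2)] n1 k3 cond''])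
    qed
  qed
qed

end



context G1 begin

lemma H_conn:
  assumes A: "A \<subseteq> L" and cl: "\<forall>e\<in>EH. e \<subseteq> A \<or> e \<subseteq> L - A"
  shows "A = {} \<or> A = L"
proof (rule ccontr)
  assume a: "\<not> ?thesis"
  have big: "\<exists>b\<in>B. b \<noteq> a" if B: "B \<subseteq> L" "a \<in> B" "\<forall>e\<in>EH. e \<subseteq> B \<or> e \<subseteq> L - B" for B a
  proof -
    obtain e where e: "e \<in> EH" "a \<in> e" using L_edge B by blast
    have "e \<subseteq> B" using B e by blast
    then show ?thesis using hg_other[OF hg_H e(1), of a] by blast
  qed
  obtain a where aA: "a \<in> A" using a by blast
  obtain a' where a': "a' \<in> A" "a' \<noteq> a" using big[OF A aA cl] by blast
  obtain b where bB: "b \<in> L - A" using a A by blast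
  have cl2: "\<forall>e\<in>EH. e \<subseteq> L - A \<or> e \<subseteq> L - (L - A)" using cl A by blast
  obtain b' where b': "b' \<in> L - A" "b' \<noteq> b" using big[OF _ bB cl2] by blast
  have aL: "a \<in> V" "a \<noteq> h" using aA A unfolding L_def by auto
  let ?X = "{h,a}"
  let ?U = "A - {a}"
  have X: "?X \<subseteq> V" "card ?X = 2" using aL hV by auto
  have U1: "?U \<subseteq> V - ?X" using A unfolding L_def by blast
  have U2: "?U \<noteq> {}" using a' by blast
  have U3: "?U \<noteq> V - ?X"
  proof
    assume eq: "?U = V - ?X"
    have "b \<in> V - ?X" using bB aA unfolding L_def by blast
    then have "b \<in> ?U" using eq by simp
    then show False using bB by blast
  qed
  note U = U1 U2 U3
  have sp: "\<forall>e\<in>E. e \<subseteq> ?U \<union> ?X \<or> e \<subseteq> V - ?U"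
  proof
    fix e assume e: "e \<in> E"
    show "e \<subseteq> ?U \<union> ?X \<or> e \<subseteq> V - ?U"
    proof (cases "h \<in> e")
      case True
      then obtain v where v: "v \<in> V" "v \<noteq> h" "e = {h,v}" using claim5 e by blast
      have "h \<notin> A" using A unfolding L_def by blast
      then show ?thesis using v hV by auto
    next
      case False
      then have "e \<in> EH" using e unfolding EH_def by blast
      then have "e \<subseteq> A \<or> e \<subseteq> L - A" using cl by blast
      then show ?thesis unfolding L_def by blast
    qed
  qed
  have "separating_set V E ?X" using sep_from_split[OF hg X U sp] .
  then show False using nosep X by blast
qed

lemma three_elems:
  assumes "finite e" "card e \<ge> 3" obtains z x y where "z \<in> e" "x \<in> e" "y \<in> e" "z \<noteq> x" "z \<noteq> y" "x \<noteq> y"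
proof -
  obtain z where z: "z \<in> e" using assms by fastforce
  obtain x where x: "x \<in> e" "x \<noteq> z" using card2_other[OF assms(1)] assms(2) by fastforce
  have "\<not> e \<subseteq> {z,x}"
  proof
    assume "e \<subseteq> {z,x}"
    then have "card e \<le> card {z,x}" by (simp add: card_mono)
    also have "\<dots> \<le> 2" by (simp add: card_insert_le_m1)
    finally show False using assms(2) by simp
  qed
  then obtain y where "y \<in> e" "y \<noteq> z" "y \<noteq> x" by blast
  then show ?thesis using that z x by blast
qed

lemma H_deg_le: "\<forall>w\<in>L - X. degree EH w \<le> k - 1" using deg_H by simp

lemma H_ordinary:
  assumes k3: "k \<ge> 3" and e: "e \<in> EH" shows "card e = 2"
proof (rule ccontr)
  assume "card e \<noteq> 2"
  then have c3: "card e \<ge> 3" using hg_edge_card[OF hg_H e] by simp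
  obtain z x y where zxy: "z \<in> e" "x \<in> e" "y \<in> e" "z \<noteq> x" "z \<noteq> y" "x \<noteq> y"
    using three_elems[OF hg_edge_fin[OF hg_H e] c3] by blast
  have eL: "e \<subseteq> L" using hg_edge_sub[OF hg_H e] .
  have nxy: "{x,y} \<notin> EH"
  proof
    assume a: "{x,y} \<in> EH"
    have "e \<noteq> {x,y}" using c3 zxy(6) by auto
    then have ex: "e \<inter> {x,y} = {x}" using H_low_edges[OF e a zxy(2)] by simp
    have "y \<in> e \<inter> {x,y}" using zxy by simp
    then have "y = x" using ex by simp
    then show False using zxy by simp
  qed
  let ?X = "{x,y}"
  define f0 where "f0 v = (if v = x then 0 else 1::nat)" for v
  have X: "?X \<subseteq> L" using eL zxy by blast
  have zX: "z \<in> L - ?X" using eL zxy by blast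
  have f0r: "f0 ` ?X \<subseteq> {..<k-1}" using k3 unfolding f0_def by auto
  have f0e: "\<forall>e\<in>EH. e \<subseteq> ?X \<longrightarrow> nonmono f0 e"
    using no_sub_pair'[OF hg_H nxy] .
  have key: "\<forall>g. (\<forall>v\<in>?X. g v = f0 v) \<longrightarrow> card (forb EH g z {}) < k-1"
  proof (intro allI impI)
    fix g assume "\<forall>v\<in>?X. g v = f0 v"
    then have "g x \<noteq> g y" using zxy unfolding f0_def by simp
    then have "card (forb EH g z {}) < degree EH z"
      using forb_lt_nonmono[OF hg_H e zxy(1) zxy(2,3)] zxy by auto
    then show "card (forb EH g z {}) < k-1" using deg_H zX by auto
  qed
  from greedy[OF hg_H X zX f0r f0e H_deg_le key]
  show False
  proof
    assume "colorable L EH (k-1)" then show False using H_not_col by blast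
  next
    assume "\<exists>U. z \<in> U \<and> U \<subseteq> L - ?X \<and> U \<noteq> L - ?X \<and> (\<forall>e\<in>EH. e \<subseteq> U \<union> ?X \<or> e \<subseteq> L - U)"
    then obtain U where U: "z \<in> U" "U \<subseteq> L - ?X" "U \<noteq> L - ?X" "\<forall>e\<in>EH. e \<subseteq> U \<union> ?X \<or> e \<subseteq> L - U" by blast
    have k22: "k - 1 \<ge> 2" using k3 by simp
    have cnd: "k - 1 \<ge> 3 \<or> (\<exists>e\<in>EH. x\<in>e \<and> y\<in>e \<and> card e \<ge> 3)" using e zxy c3 by blast
    have "x \<in> L" "y \<in> L" "U \<noteq> {}" using X U(1) by auto
    then show False using H_dirac[OF _ _ zxy(6) nxy U(2) _ U(3) U(4) k22 cnd] by blast
  qed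
qed

end



context G1 begin

lemma edge_pair: assumes "e \<in> EH" "card e = 2" "a \<in> e" shows "\<exists>b. b \<noteq> a \<and> e = {a,b}"
  using assms(2,3) by (auto simp: card_2_iff)

lemma pair_edge_ne: "{a,b} \<in> EH \<Longrightarrow> a \<noteq> b"
  using hg_edge_card[OF hg_H] by fastforce

lemma k4_false: assumes k4: "k \<ge> 4" shows False
proof -
  have ord: "\<And>e. e \<in> EH \<Longrightarrow> card e = 2" using H_ordinary k4 by simp
  have "L \<noteq> {}" using card_L by auto
  then obtain z where zL: "z \<in> L" by blast
  define Nb where "Nb = {v. {z,v} \<in> EH}"
  have NbL: "Nb \<subseteq> L" using hg_edge_sub[OF hg_H] unfolding Nb_def by blast
  have zNb: "z \<notin> Nb" using pair_edge_ne unfolding Nb_def by blast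
  have finL: "finite L" using hg_H unfolding hypergraph_def by blast
  show False
  proof (cases "\<exists>x\<in>Nb. \<exists>y\<in>Nb. x \<noteq> y \<and> {x,y} \<notin> EH")
    case True
    then obtain x y where xy: "x \<in> Nb" "y \<in> Nb" "x \<noteq> y" "{x,y} \<notin> EH" by blast
    let ?X = "{x,y}"
    have X: "?X \<subseteq> L" using xy NbL by blast
    have zX: "z \<in> L - ?X" using zL zNb xy by blast
    have f0r: "(\<lambda>_. 0::nat) ` ?X \<subseteq> {..<k-1}" using k4 by auto
    have f0e: "\<forall>e\<in>EH. e \<subseteq> ?X \<longrightarrow> nonmono (\<lambda>_. 0) e"
      using no_sub_pair'[OF hg_H xy(4)] .
    have e1: "{z,x} \<in> EH" "{z,y} \<in> EH" using xy unfolding Nb_def by auto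
    have ne: "{z,x} \<noteq> {z,y}" using xy zNb by (metis doubleton_eq_iff)
    have key: "\<forall>g. (\<forall>v\<in>?X. g v = (\<lambda>_. 0::nat) v) \<longrightarrow> card (forb EH g z {}) < k-1"
    proof (intro allI impI)
      fix g assume "\<forall>v\<in>?X. g v = (\<lambda>_. 0::nat) v"
      then have gxy: "g x = g y" by simp
      have m: "z \<in> {z,x}" "z \<in> {z,y}" "x \<in> {z,x}" "y \<in> {z,y}" by auto
      have n: "x \<noteq> z" "y \<noteq> z" using xy zNb by auto
      have "card (forb EH g z {}) < degree EH z"
        using forb_lt_two[OF hg_H e1(1) m(1) e1(2) m(2) ne m(3) m(4) n gxy] .
      then show "card (forb EH g z {}) < k-1" using deg_H zL by auto
    qed
    from greedy[OF hg_H X zX f0r f0e H_deg_le key]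
    show False
    proof
      assume "colorable L EH (k-1)" then show False using H_not_col by blast
    next
      assume "\<exists>U. z \<in> U \<and> U \<subseteq> L - ?X \<and> U \<noteq> L - ?X \<and> (\<forall>e\<in>EH. e \<subseteq> U \<union> ?X \<or> e \<subseteq> L - U)"
      then obtain U where U: "z \<in> U" "U \<subseteq> L - ?X" "U \<noteq> L - ?X" "\<forall>e\<in>EH. e \<subseteq> U \<union> ?X \<or> e \<subseteq> L - U" by blast
      have k22: "k - 1 \<ge> 2" using k4 by simp
      have cnd: "k - 1 \<ge> 3 \<or> (\<exists>e\<in>EH. x\<in>e \<and> y\<in>e \<and> card e \<ge> 3)" using k4 by (intro disjI1) simp
      have "x \<in> L" "y \<in> L" "U \<noteq> {}" using X U(1) by auto
      then show False using H_dirac[OF _ _ xy(3) xy(4) U(2) _ U(3) U(4) k22 cnd] by blast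
    qed
  next
    case False
    then have cl: "\<And>x y. x \<in> Nb \<Longrightarrow> y \<in> Nb \<Longrightarrow> x \<noteq> y \<Longrightarrow> {x,y} \<in> EH" by blast
    define A where "A = insert z Nb"
    have AL: "A \<subseteq> L" using zL NbL unfolding A_def by blast
    have finA: "finite A" using AL finL finite_subset by blast
    have fE: "finite EH" using hg_finite_E[OF hg_H] .
    have edges_at: "{e\<in>EH. a \<in> e} = (\<lambda>w. {a,w}) ` (A - {a})" if aA: "a \<in> A" for a
    proof (cases "a = z")
      case True
      have "{e\<in>EH. a \<in> e} \<subseteq> (\<lambda>w. {a,w}) ` (A - {a})"
      proof
        fix e assume e: "e \<in> {e\<in>EH. a \<in> e}"
        then obtain b where b: "b \<noteq> a" "e = {a,b}" using edge_pair ord by blast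
        then have "b \<in> Nb" using e True unfolding Nb_def by auto
        then show "e \<in> (\<lambda>w. {a,w}) ` (A - {a})" using b True unfolding A_def by auto
      qed
      moreover have "(\<lambda>w. {a,w}) ` (A - {a}) \<subseteq> {e\<in>EH. a \<in> e}" using True unfolding A_def Nb_def by auto
      ultimately show ?thesis by blast
    next
      case False
      then have aN: "a \<in> Nb" using aA unfolding A_def by blast
      have sub: "(\<lambda>w. {a,w}) ` (A - {a}) \<subseteq> {e\<in>EH. a \<in> e}"
      proof
        fix e assume "e \<in> (\<lambda>w. {a,w}) ` (A - {a})"
        then obtain w where w: "w \<in> A" "w \<noteq> a" "e = {a,w}" by blast
        show "e \<in> {e\<in>EH. a \<in> e}"
        proof (cases "w = z")
          case True then show ?thesis using aN w unfolding Nb_def by (auto simp: insert_commute)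
        next
          case False then show ?thesis using cl[OF aN _ w(2)[symmetric]] w unfolding A_def by auto
        qed
      qed
      have inj: "inj_on (\<lambda>w. {a,w}) (A - {a})" unfolding inj_on_def by (metis doubleton_eq_iff DiffD2 singletonI)
      have "card A = Suc (card Nb)" using zNb finA unfolding A_def by (simp add: finite_subset)
      moreover have "card ((\<lambda>w. {z,w}) ` Nb) = card Nb"
        using card_image[of "(\<lambda>w. {z,w})" Nb] zNb unfolding inj_on_def by (metis doubleton_eq_iff)
      moreover have "(\<lambda>w. {z,w}) ` Nb = {e\<in>EH. z \<in> e}"
      proof
        show "(\<lambda>w. {z,w}) ` Nb \<subseteq> {e\<in>EH. z \<in> e}" unfolding Nb_def by auto
        show "{e\<in>EH. z \<in> e} \<subseteq> (\<lambda>w. {z,w}) ` Nb"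
        proof
          fix e assume e: "e \<in> {e\<in>EH. z \<in> e}"
          then obtain b where b: "b \<noteq> z" "e = {z,b}" using edge_pair ord by blast
          then show "e \<in> (\<lambda>w. {z,w}) ` Nb" using e unfolding Nb_def by auto
        qed
      qed
      ultimately have cA: "card A = k" using deg_H[OF zL] k4 unfolding degree_def by simp
      have "card ((\<lambda>w. {a,w}) ` (A - {a})) = k - 1" using card_image[OF inj] cA aA finA by simp
      then have "card ((\<lambda>w. {a,w}) ` (A - {a})) = card {e\<in>EH. a \<in> e}"
        using deg_H aA AL unfolding degree_def by auto
      then show ?thesis using card_subset_eq[OF _ sub] fE by auto
    qed
    have cA: "card A = k"
    proof -
      have "card {e\<in>EH. z \<in> e} = card (A - {z})" using edges_at[of z] card_image unfolding A_def
        by (metis (no_types, lifting) doubleton_eq_iff inj_onI insertI1 DiffD2 singletonI)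
      then have "card Nb = k - 1" using deg_H[OF zL] zNb unfolding degree_def A_def by simp
      moreover have "finite Nb" using finA unfolding A_def by simp
      ultimately show ?thesis using zNb k4 unfolding A_def by simp
    qed
    have "\<forall>e\<in>EH. e \<subseteq> A \<or> e \<subseteq> L - A"
    proof
      fix e assume e: "e \<in> EH"
      show "e \<subseteq> A \<or> e \<subseteq> L - A"
      proof (cases "e \<inter> A = {}")
        case True then show ?thesis using hg_edge_sub[OF hg_H e] by blast
      next
        case False
        then obtain a where a: "a \<in> e" "a \<in> A" by blast
        then have "e \<in> (\<lambda>w. {a,w}) ` (A - {a})" using edges_at e by blast
        then show ?thesis using a by auto
      qed
    qed
    then have "A = L" using H_conn[OF AL] unfolding A_def by blast
    then show False using cA card_L by simp
  qed
qed

end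



context G1 begin

lemma k2_wheel: assumes "k = 2" shows "hyperwheel V E"
proof -
  have nc: "\<not> colorable L EH 1" using H_not_col assms by simp
  have EHne: "EH \<noteq> {}"
  proof
    assume "EH = {}"
    then have "colorable L EH 1" unfolding colorable_iff by (intro exI[of _ "\<lambda>_. 0"]) auto
    then show False using nc by blast
  qed
  then obtain e where e: "e \<in> EH" by blast
  have one_col: "E' = {}" if c1: "colorable L E' 1" and h1: "hypergraph L E'" for E'
  proof (rule ccontr)
    assume "E' \<noteq> {}"
    then obtain e' where e': "e' \<in> E'" by blast
    obtain f where f: "f ` L \<subseteq> {..<1}" "\<forall>e\<in>E'. nonmono f e" using c1 unfolding colorable_iff by blast
    obtain u v where uv: "u \<in> e'" "v \<in> e'" "f u \<noteq> f v" using f(2) e' unfolding nonmono_def by blast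
    have "u \<in> L" "v \<in> L" using hg_edge_sub[OF h1 e'] uv by auto
    then have "f u < 1" "f v < 1" using f(1) by auto
    then show False using uv(3) by simp
  qed
  have "hypergraph L (EH - {e})" using hg_H unfolding hypergraph_def by auto
  moreover have "colorable L (EH - {e}) 1" using H_del_edge[OF e] assms by simp
  ultimately have "EH - {e} = {}" using one_col by blast
  then have EHe: "EH = {e}" using e by blast
  have eL: "e = L"
  proof
    show "e \<subseteq> L" using hg_edge_sub[OF hg_H e] .
    show "L \<subseteq> e"
    proof
      fix v assume "v \<in> L"
      then obtain e' where "e' \<in> EH" "v \<in> e'" using L_edge by blast
      then show "v \<in> e" using EHe by blast
    qed
  qed
  have "card e \<ge> 2" "finite e" using hg_edge_card[OF hg_H e] hg_edge_fin[OF hg_H e] by auto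
  moreover have "h \<notin> e" "V = insert h e" using eL hV unfolding L_def by auto
  moreover have "E = insert e {{h,u} | u. u \<in> e}" using E_decomp EHe eL by auto
  ultimately show ?thesis unfolding hyperwheel_def by blast
qed

definition nb where "nb v = {u. {v,u} \<in> EH}"

lemma k3_facts:
  assumes "k = 3"
  shows "\<And>e. e \<in> EH \<Longrightarrow> card e = 2" and "\<And>v. v \<in> L \<Longrightarrow> card (nb v) = 2"
proof -
  show ord: "\<And>e. e \<in> EH \<Longrightarrow> card e = 2" using H_ordinary assms by simp
  fix v assume v: "v \<in> L"
  have "(\<lambda>u. {v,u}) ` nb v = {e\<in>EH. v \<in> e}"
  proof
    show "(\<lambda>u. {v,u}) ` nb v \<subseteq> {e\<in>EH. v \<in> e}" unfolding nb_def by auto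
    show "{e\<in>EH. v \<in> e} \<subseteq> (\<lambda>u. {v,u}) ` nb v"
    proof
      fix e assume e: "e \<in> {e\<in>EH. v \<in> e}"
      then obtain b where b: "b \<noteq> v" "e = {v,b}" using edge_pair ord by blast
      then show "e \<in> (\<lambda>u. {v,u}) ` nb v" using e unfolding nb_def by auto
    qed
  qed
  moreover have "inj_on (\<lambda>u. {v,u}) (nb v)"
    unfolding inj_on_def nb_def using pair_edge_ne by (metis doubleton_eq_iff mem_Collect_eq)
  ultimately have "card (nb v) = card {e\<in>EH. v \<in> e}" by (metis card_image)
  then show "card (nb v) = 2" using deg_H[OF v] assms unfolding degree_def by simp
qed

lemma nb_exact:
  assumes k3: "k = 3" and v: "v \<in> L" and ab: "a \<in> nb v" "b \<in> nb v" "a \<noteq> b"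
  shows "nb v = {a,b}"
proof -
  have fin: "finite (nb v)" using k3_facts(2)[OF k3 v] by (metis card.infinite zero_neq_numeral)
  have "{a,b} \<subseteq> nb v" using ab by blast
  moreover have "card {a,b} = card (nb v)" using k3_facts(2)[OF k3 v] ab by simp
  ultimately show ?thesis using card_subset_eq[OF fin] by blast
qed

lemma nb_sym: "u \<in> nb v \<longleftrightarrow> v \<in> nb u" unfolding nb_def by (simp add: insert_commute)

lemma nb_L: "u \<in> nb v \<Longrightarrow> u \<in> L \<and> v \<in> L" unfolding nb_def using hg_edge_sub[OF hg_H] by blast

end



lemma nx_pv: assumes "i < n" "n \<ge> 1" shows "Suc ((i + n - 1) mod n) mod n = i"
proof (cases "i = 0")
  case True
  then have "(i + n - 1) mod n = n - 1" using assms by simp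
  then show ?thesis using True assms by simp
next
  case False
  then have "i + n - 1 = (i - 1) + n" by simp
  then have "(i + n - 1) mod n = (i - 1) mod n" by simp
  then have "(i + n - 1) mod n = i - 1" using assms by simp
  then show ?thesis using False assms by simp
qed

lemma nx_ne_pv: assumes "i < n" "n \<ge> 3" shows "Suc i mod n \<noteq> (i + n - 1) mod n"
proof (cases "i = 0")
  case True then show ?thesis using assms by simp
next
  case False
  have "i + n - 1 = (i - 1) + n" using False by simp
  then have "(i + n - 1) mod n = (i - 1) mod n" by simp
  then have pv: "(i + n - 1) mod n = i - 1" using assms by simp
  show ?thesis
  proof (cases "Suc i < n")
    case True then show ?thesis using pv by simp
  next
    case False
    then have "Suc i = n" using assms by simp
    then show ?thesis using pv assms by simp
  qed
qed

context G1 begin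

lemma k3_wheel: assumes k3: "k = 3" shows "odd_wheel V E"
proof -
  have ord: "\<And>e. e \<in> EH \<Longrightarrow> card e = 2" using k3_facts(1)[OF k3] .
  have c2: "\<And>v. v \<in> L \<Longrightarrow> card (nb v) = 2" using k3_facts(2)[OF k3] .
  have finL: "finite L" using hg_H unfolding hypergraph_def by blast
  define P where "P xs \<longleftrightarrow> xs \<noteq> [] \<and> set xs \<subseteq> L \<and> distinct xs \<and> (\<forall>i. Suc i < length xs \<longrightarrow> {xs!i, xs!Suc i} \<in> EH)" for xs
  have "L \<noteq> {}" using card_L by auto
  then obtain z where zL: "z \<in> L" by blast
  have Pz: "P [z]" unfolding P_def using zL by simp
  have bnd: "\<forall>ys. P ys \<longrightarrow> length ys < Suc (card L)"
  proof (intro allI impI)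
    fix ys assume "P ys"
    then have s: "set ys \<subseteq> L" "distinct ys" unfolding P_def by auto
    then have "card (set ys) \<le> card L" "length ys = card (set ys)"
      using card_mono[OF finL s(1)] distinct_card[OF s(2)] by auto
    then show "length ys < Suc (card L)" by simp
  qed
  obtain c where Pc: "P c" and mx: "\<forall>ys. P ys \<longrightarrow> length ys \<le> length c"
    using ex_has_greatest_nat[of P "[z]" length "Suc (card L)", OF Pz bnd] by blast
  define n where "n = length c"
  have cne: "c \<noteq> []" and cL: "set c \<subseteq> L" and dc: "distinct c"
    and ce: "\<And>i. Suc i < n \<Longrightarrow> {c!i, c!Suc i} \<in> EH" using Pc unfolding P_def n_def by auto
  have n1: "n \<ge> 1" using cne unfolding n_def by (simp add: Suc_leI)
  define t where "t = c!(n-1)"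
  have tL: "t \<in> L" using cL n1 unfolding t_def n_def by (simp add: subsetD)
  have ext_r: "u \<in> set c" if u: "u \<in> nb t" for u
  proof (rule ccontr)
    assume nu: "u \<notin> set c"
    have "P (c @ [u])" unfolding P_def
    proof (intro conjI allI impI)
      show "c @ [u] \<noteq> []" by simp
      show "set (c @ [u]) \<subseteq> L" using cL nb_L[OF u] by simp
      show "distinct (c @ [u])" using dc nu by simp
      fix i assume i: "Suc i < length (c @ [u])"
      show "{(c @ [u]) ! i, (c @ [u]) ! Suc i} \<in> EH"
      proof (cases "Suc i < n")
        case True then show ?thesis using ce[OF True] unfolding n_def by (simp add: nth_append)
      next
        case False
        then have i1: "i = n - 1" "Suc i = length c" using i unfolding n_def by auto
        have "i < length c" using i1 by simp
        then have "(c @ [u]) ! i = c ! i" by (simp add: nth_append)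
        moreover have "(c @ [u]) ! Suc i = u" using i1(2) by simp
        ultimately show ?thesis using u i1(1) unfolding t_def nb_def by simp
      qed
    qed
    then show False using mx unfolding n_def by fastforce
  qed
  have n2: "n \<ge> 2"
  proof (rule ccontr)
    assume "\<not> ?thesis"
    then have "n = 1" using n1 by simp
    then have sc: "set c = {t}" using cne unfolding t_def n_def by (cases c) auto
    have "nb t \<noteq> {}" using c2[OF tL] by auto
    then obtain u where "u \<in> nb t" by blast
    then have "u = t" "{t,u} \<in> EH" using ext_r sc unfolding nb_def by auto
    then show False using pair_edge_ne by blast
  qed
  have pred: "c!(n-2) \<in> nb t"
    using ce[of "n-2"] n2 unfolding t_def nb_def by (simp add: insert_commute Suc_diff_Suc numeral_2_eq_2)
  obtain u where u: "u \<in> nb t" "u \<noteq> c!(n-2)"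
  proof -
    have "\<not> nb t \<subseteq> {c!(n-2)}"
    proof
      assume "nb t \<subseteq> {c!(n-2)}"
      then have "card (nb t) \<le> card {c!(n-2)}" by (intro card_mono) auto
      then show False using c2[OF tL] by simp
    qed
    then show ?thesis using that by blast
  qed
  obtain j where j: "j < n" "u = c!j" using ext_r[OF u(1)] unfolding n_def by (metis in_set_conv_nth)
  have "u \<noteq> t" using u(1) pair_edge_ne unfolding nb_def by blast
  then have jn1: "j \<noteq> n - 1" using j unfolding t_def by blast
  have jn2: "j \<noteq> n - 2" using u(2) j by blast
  have jlt: "j + 2 < n" using j jn1 jn2 n2 by linarith
  have j0: "j = 0"
  proof (rule ccontr)
    assume "j \<noteq> 0"
    then have j1: "j \<ge> 1" by simp
    have cjL: "c!j \<in> L" using cL j unfolding n_def by (simp add: subsetD)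
    have a: "c!(j-1) \<in> nb (c!j)" using ce[of "j-1"] j j1 unfolding nb_def by (simp add: insert_commute)
    have b: "c!(j+1) \<in> nb (c!j)" using ce[of j] jlt unfolding nb_def by simp
    have ab: "c!(j-1) \<noteq> c!(j+1)" using dc jlt j1 unfolding n_def by (simp add: nth_eq_iff_index_eq)
    have "t \<in> nb (c!j)" using u(1) j nb_sym by blast
    then have "t = c!(j-1) \<or> t = c!(j+1)" using nb_exact[OF k3 cjL a b ab] by blast
    then have "n - 1 = j - 1 \<or> n - 1 = j + 1" using dc jlt n2 unfolding t_def n_def by (auto simp: nth_eq_iff_index_eq)
    then show False using jlt j1 by linarith
  qed
  have n3: "n \<ge> 3" using jlt j0 by simp
  have close: "{c!(n-1), c!0} \<in> EH" using u(1) j j0 unfolding t_def nb_def by simp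
  define nx where "nx i = Suc i mod n" for i
  define pv where "pv i = (i + n - 1) mod n" for i
  have nxl: "nx i < n" and pvl: "pv i < n" for i using n1 unfolding nx_def pv_def by auto
  have cyc: "{c!i, c!(nx i)} \<in> EH" if i: "i < n" for i
  proof (cases "Suc i < n")
    case True then show ?thesis using ce[OF True] unfolding nx_def by simp
  next
    case False
    then have "i = n - 1" "Suc i = n" using i by auto
    then show ?thesis using close unfolding nx_def by simp
  qed
  have nbi: "nb (c!i) = {c!(nx i), c!(pv i)}" if i: "i < n" for i
  proof -
    have ciL: "c!i \<in> L" using cL i unfolding n_def by (simp add: subsetD)
    have a: "c!(nx i) \<in> nb (c!i)" using cyc[OF i] unfolding nb_def by simp
    have "nx (pv i) = i" using nx_pv[OF i n1] unfolding nx_def pv_def .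
    then have "{c!(pv i), c!i} \<in> EH" using cyc[OF pvl[of i]] by simp
    then have b: "c!(pv i) \<in> nb (c!i)" unfolding nb_def by (simp add: insert_commute)
    have "nx i \<noteq> pv i" using nx_ne_pv[OF i n3] unfolding nx_def pv_def .
    then have ab: "c!(nx i) \<noteq> c!(pv i)" using dc nxl pvl unfolding n_def by (simp add: nth_eq_iff_index_eq)
    show ?thesis using nb_exact[OF k3 ciL a b ab] .
  qed
  have nbc: "nb v \<subseteq> set c" if vc: "v \<in> set c" for v
  proof -
    obtain i where i: "i < n" "v = c!i" using vc unfolding n_def by (metis in_set_conv_nth)
    have "c!(nx i) \<in> set c" "c!(pv i) \<in> set c" using nxl pvl unfolding n_def by auto
    then show ?thesis using nbi[OF i(1)] i(2) by auto
  qed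
  have "\<forall>e\<in>EH. e \<subseteq> set c \<or> e \<subseteq> L - set c"
  proof
    fix e assume e: "e \<in> EH"
    obtain a where "a \<in> e" using hg_other[OF hg_H e] by blast
    then obtain b where b: "b \<noteq> a" "e = {a,b}" using edge_pair[OF e ord[OF e]] by blast
    have ab: "b \<in> nb a" "a \<in> nb b" using e b unfolding nb_def by (auto simp: insert_commute)
    have eL: "e \<subseteq> L" using hg_edge_sub[OF hg_H e] .
    show "e \<subseteq> set c \<or> e \<subseteq> L - set c"
    proof (cases "a \<in> set c \<or> b \<in> set c")
      case True then show ?thesis using nbc ab b by blast
    next
      case False then show ?thesis using eL b by blast
    qed
  qed
  then have scL: "set c = L" using H_conn[OF cL] cne by auto
  define C where "C = {{c!i, c!((i+1) mod length c)} | i. i < length c}"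
  have EHC: "EH = C"
  proof
    show "C \<subseteq> EH" using cyc unfolding C_def nx_def n_def by auto
    show "EH \<subseteq> C"
    proof
      fix e assume e: "e \<in> EH"
      obtain a where "a \<in> e" using hg_other[OF hg_H e] by blast
      then obtain b where b: "b \<noteq> a" "e = {a,b}" using edge_pair[OF e ord[OF e]] by blast
      have "a \<in> L" using hg_edge_sub[OF hg_H e] b by blast
      then obtain i where i: "i < n" "a = c!i" using scL unfolding n_def by (metis in_set_conv_nth)
      have "b \<in> nb a" using e b unfolding nb_def by simp
      then have "b = c!(nx i) \<or> b = c!(pv i)" using nbi[OF i(1)] i(2) by simp
      then show "e \<in> C"
      proof
        assume "b = c!(nx i)"
        then show ?thesis using b i unfolding C_def nx_def n_def by auto
      next
        assume bp: "b = c!(pv i)"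
        have "nx (pv i) = i" using nx_pv[OF i(1) n1] unfolding nx_def pv_def .
        then have "e = {c!(pv i), c!((pv i + 1) mod length c)}" using b bp i unfolding nx_def n_def
          by (auto simp: insert_commute)
        then show ?thesis using pvl unfolding C_def n_def by blast
      qed
    qed
  qed
  have odd: "odd n"
  proof (rule ccontr)
    assume ev: "\<not> odd n"
    have inj: "inj_on (nth c) {..<n}" using dc unfolding n_def by (simp add: inj_on_nth)
    define col where "col v = (the_inv_into {..<n} (nth c) v) mod 2" for v
    have coli: "col (c!i) = i mod 2" if "i < n" for i
      unfolding col_def using the_inv_into_f_f[OF inj] that by simp
    have "col ` L \<subseteq> {..<2}" unfolding col_def by auto
    moreover have "\<forall>e\<in>EH. nonmono col e"
    proof
      fix e assume "e \<in> EH"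
      then obtain i where i: "i < n" "e = {c!i, c!((i+1) mod n)}" using EHC unfolding C_def n_def by blast
      have "col (c!i) \<noteq> col (c!((i+1) mod n))"
      proof (cases "Suc i < n")
        case True
        have "i mod 2 \<noteq> Suc i mod 2" by presburger
        then show ?thesis using coli i True by simp
      next
        case False
        then have si: "Suc i = n" using i by simp
        then have "i mod 2 = 1" using ev by presburger
        then show ?thesis using coli i n1 si by simp
      qed
      then show "nonmono col e" unfolding nonmono_def using i by blast
    qed
    ultimately have "colorable L EH 2" unfolding colorable_iff by blast
    then show False using H_not_col k3 by simp
  qed
  have "h \<notin> set c" "V = insert h (set c)" using scL hV unfolding L_def by auto
  moreover have "{{h,v} | v. v \<in> L} = {{h, c!i} | i. i < length c}"
  proof
    show "{{h,v} | v. v \<in> L} \<subseteq> {{h, c!i} | i. i < length c}"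
    proof
      fix e assume "e \<in> {{h,v} | v. v \<in> L}"
      then obtain v where v: "e = {h,v}" "v \<in> set c" using scL by blast
      then obtain i where "i < length c" "v = c!i" by (metis in_set_conv_nth)
      then show "e \<in> {{h, c!i} | i. i < length c}" using v by blast
    qed
    show "{{h, c!i} | i. i < length c} \<subseteq> {{h,v} | v. v \<in> L}" using scL nth_mem by blast
  qed
  then have "E = C \<union> {{h, c!i} | i. i < length c}" using E_decomp EHC by simp
  ultimately show ?thesis unfolding odd_wheel_def C_def using dc n3 odd unfolding n_def by blast
qed

end

theorem lemma7:
  fixes V :: "'a set" and E :: "'a set set" and k :: nat
  assumes "k \<ge> 2"
    and "critical (k + 1) V E"
    and "card (high_vertices k V E) = 1"
  shows "(\<exists>S. card S = 2 \<and> separating_set V E S)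
       \<or> (k = 2 \<and> hyperwheel V E)
       \<or> (k = 3 \<and> odd_wheel V E)"
proof (cases "\<exists>S. card S = 2 \<and> separating_set V E S")
  case True then show ?thesis by blast
next
  case False
  obtain h where hh: "high_vertices k V E = {h}" using assms(3) card_1_singletonE by blast
  then have hV: "h \<in> V" and hd: "degree E h \<ge> k + 1" unfolding high_vertices_def by auto
  have low: "\<forall>v\<in>V-{h}. degree E v = k"
  proof
    fix v assume v: "v \<in> V - {h}"
    then have "v \<notin> high_vertices k V E" using hh by blast
    then have "degree E v \<le> k" using v unfolding high_vertices_def by auto
    moreover have "degree E v \<ge> k" using crit_min_degree[OF assms(2)] v by blast
    ultimately show "degree E v = k" by simp
  qed
  interpret G: G1 V E k h using assms(1,2) hV low hd False by unfold_locales auto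
  show ?thesis
  proof (cases "k = 2")
    case True then show ?thesis using G.k2_wheel by blast
  next
    case False
    show ?thesis
    proof (cases "k = 3")
      case True then show ?thesis using G.k3_wheel by blast
    next
      case False
      then have "k \<ge> 4" using \<open>k \<noteq> 2\<close> assms(1) by simp
      then show ?thesis using G.k4_false by blast
    qed
  qed
qed

end
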